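(* Let $G$ be a graph with $N$ vertices and maximum degree $\Delta$. Let $Q^\dagger=\sum_i Q_i^\dagger$ (sum over all vertices $i$) with $Q_i^\dagger=\prod_{j\in I_i}s_j^\dagger$, where the index sets $I_i$ satisfy: (1) $|I_i|=c$ for a constant $c>1$; (2) $|\mathbf r_j-\mathbf r_i|\le d$ for all $j\in I_i$, for a constant $d$; (3) $I_{i_1}\ne I_{i_2}$ whenever $i_1\ne i_2$. Then there exists a $\delta$-locality-preserving map $M$ with $\delta\le 8d(\Delta^{4d}+1)$ such that $M|W\rangle=N^{-1/2}Q^\dagger|\overline 0\rangle$ and $M|\overline 0\rangle=|\overline 0\rangle$. Consequently, if $G$ is connected, then for every positive integer $R$ with $N>\Delta^{4(R+8d(\Delta^{4d}+1))}+1$, every operator $H$ of range at most $R$ with $H|\overline 0\rangle\propto|\overline 0\rangle$ and $HQ^\dagger|\overline 0\rangle\propto Q^\dagger|\overline 0\rangle$ can be written as $H=\Omega I+\omega\sum_i s_i^\dagger s_i+\sum_{X}h_X$, with constants $\Omega,\omega$ and operators $h_X$ supported in vertex sets $X$ with $\mathrm{diam}(X)\le 2R+24d(\Delta^{4d}+1)$, satisfying $h_XQ^\dagger|\overline 0\rangle=h_X|\overline 0\rangle=0$.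
   Context: Qubits on the vertices of $G$ with local basis $|0\rangle,|1\rangle$; $s_i^\dagger$ acts on vertex $i$ as $s^\dagger|0\rangle=|1\rangle$, $s^\dagger|1\rangle=0$, $s_i=(s_i^\dagger)^\dagger$; $|\overline 0\rangle=|0\rangle^{\otimes N}$; $|W\rangle=N^{-1/2}\sum_i s_i^\dagger|\overline 0\rangle$. Distances $|\mathbf r_i-\mathbf r_j|$ are graph distances; for a vertex set $X$, $\mathrm{diam}(X)=1+\max_{i,j\in X}(\text{distance})$; an operator is supported in $X$ if it acts as identity outside $X$. Every operator has a unique expansion in normal-ordered strings $s^\dagger_{j_1}\cdots s^\dagger_{j_n}s_{k_1}\cdots s_{k_m}$ (the $j$'s pairwise distinct, the $k$'s pairwise distinct); a string has range $R$ where $R$ is the smallest positive integer with all pairwise distances between its sites $<R$; an operator has range at most $R$ if all its strings with nonzero coefficient do. Operators need not be Hermitian. A linear map $M$ is $\delta$-locality-preserving if it is invertible and for every operator $O$ of range at most $R$ (any $R$), both $MOM^{-1}$ and $M^{-1}OM$ have range at most $R+\delta$. *)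

theory Defs
  imports Complex_Main "HOL-Library.Extended_Nat"
begin

text \<open>A computational basis state is identified with the set of vertices in state 1.
  Operators are matrices indexed by basis states: Op x y is the entry between x and y.\<close>

type_synonym 'v state = "'v set \<Rightarrow> complex"
type_synonym 'v qop = "'v set \<Rightarrow> 'v set \<Rightarrow> complex"

definition simple_graph :: "('v \<Rightarrow> 'v \<Rightarrow> bool) \<Rightarrow> bool" where
  "simple_graph E \<longleftrightarrow> (\<forall>a b. E a b \<longrightarrow> E b a) \<and> (\<forall>a. \<not> E a a)"

definition max_degree :: "('v::finite \<Rightarrow> 'v \<Rightarrow> bool) \<Rightarrow> nat" where
  "max_degree E = Max (range (\<lambda>v. card {u. E v u}))"

definition gdist :: "('v \<Rightarrow> 'v \<Rightarrow> bool) \<Rightarrow> 'v \<Rightarrow> 'v \<Rightarrow> enat" where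
  "gdist E a b = (if \<exists>n. (E ^^ n) a b then enat (LEAST n. (E ^^ n) a b) else \<infinity>)"

definition graph_connected :: "('v \<Rightarrow> 'v \<Rightarrow> bool) \<Rightarrow> bool" where
  "graph_connected E \<longleftrightarrow> (\<forall>a b. gdist E a b \<noteq> \<infinity>)"

definition diam :: "('v \<Rightarrow> 'v \<Rightarrow> bool) \<Rightarrow> 'v set \<Rightarrow> enat" where
  "diam E X = 1 + Max {gdist E i j | i j. i \<in> X \<and> j \<in> X}"

definition app :: "'v::finite qop \<Rightarrow> 'v state \<Rightarrow> 'v state" where
  "app Op \<psi> = (\<lambda>x. \<Sum>y\<in>UNIV. Op x y * \<psi> y)"

definition mmul :: "'v::finite qop \<Rightarrow> 'v qop \<Rightarrow> 'v qop" where
  "mmul A B = (\<lambda>x y. \<Sum>z\<in>UNIV. A x z * B z y)"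

definition idop :: "'v qop" where
  "idop = (\<lambda>x y. if x = y then 1 else 0)"

text \<open>Normal-ordered string  s^dagger_J s_K  (product over the distinct sites in J, resp. K).\<close>
definition nstr :: "'v set \<Rightarrow> 'v set \<Rightarrow> 'v qop" where
  "nstr J K = (\<lambda>x y. if K \<subseteq> y \<and> J \<inter> (y - K) = {} \<and> x = (y - K) \<union> J then 1 else 0)"

definition sdag :: "'v \<Rightarrow> 'v qop" where "sdag i = nstr {i} {}"
definition sann :: "'v \<Rightarrow> 'v qop" where "sann i = nstr {} {i}"

definition vac :: "'v state" where "vac = (\<lambda>x. if x = {} then 1 else 0)"

definition Wstate :: "'v::finite state" where
  "Wstate = (\<lambda>x. complex_of_real (1 / sqrt (real (card (UNIV :: 'v set)))) * (\<Sum>i\<in>UNIV. app (sdag i) vac x))"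

definition string_range_le :: "('v \<Rightarrow> 'v \<Rightarrow> bool) \<Rightarrow> 'v set \<Rightarrow> 'v set \<Rightarrow> nat \<Rightarrow> bool" where
  "string_range_le E J K R \<longleftrightarrow> 0 < R \<and> (\<forall>a\<in>J \<union> K. \<forall>b\<in>J \<union> K. gdist E a b < enat R)"

definition range_le :: "('v::finite \<Rightarrow> 'v \<Rightarrow> bool) \<Rightarrow> 'v qop \<Rightarrow> nat \<Rightarrow> bool" where
  "range_le E Op R \<longleftrightarrow> (\<exists>c :: 'v set \<Rightarrow> 'v set \<Rightarrow> complex.
      Op = (\<lambda>x y. \<Sum>J\<in>UNIV. \<Sum>K\<in>UNIV. c J K * nstr J K x y) \<and>
      (\<forall>J K. c J K \<noteq> 0 \<longrightarrow> string_range_le E J K R))"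

definition inverse_ops :: "'v::finite qop \<Rightarrow> 'v qop \<Rightarrow> bool" where
  "inverse_ops M Mi \<longleftrightarrow> mmul M Mi = idop \<and> mmul Mi M = idop"

definition loc_preserving :: "('v::finite \<Rightarrow> 'v \<Rightarrow> bool) \<Rightarrow> nat \<Rightarrow> 'v qop \<Rightarrow> bool" where
  "loc_preserving E \<delta> M \<longleftrightarrow> (\<exists>Mi. inverse_ops M Mi \<and>
     (\<forall>Op R. 0 < R \<longrightarrow> range_le E Op R \<longrightarrow>
        range_le E (mmul (mmul M Op) Mi) (R + \<delta>) \<and> range_le E (mmul (mmul Mi Op) M) (R + \<delta>)))"

definition supported_in :: "'v qop \<Rightarrow> 'v set \<Rightarrow> bool" where
  "supported_in Op X \<longleftrightarrow> (\<exists>A. \<forall>x y. Op x y = (if x - X = y - X then A (x \<inter> X) (y \<inter> X) else 0))"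

definition proportional :: "'v state \<Rightarrow> 'v state \<Rightarrow> bool" where
  "proportional \<phi> \<psi> \<longleftrightarrow> (\<exists>a::complex. \<phi> = (\<lambda>x. a * \<psi> x))"

end

theory Submission
  imports Defs
begin


definition near :: "('v \<Rightarrow> 'v \<Rightarrow> bool) \<Rightarrow> nat \<Rightarrow> 'v \<Rightarrow> 'v \<Rightarrow> bool" where
  "near E n a b \<longleftrightarrow> (\<exists>m\<le>n. (E ^^ m) a b)"

lemma gdist_le_iff: "gdist E a b \<le> enat n \<longleftrightarrow> near E n a b"
proof
  assume h: "gdist E a b \<le> enat n"
  then have ex: "\<exists>m. (E ^^ m) a b" unfolding gdist_def by (auto split: if_splits)
  then have "enat (LEAST m. (E ^^ m) a b) \<le> enat n" using h unfolding gdist_def by simp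
  then show "near E n a b" unfolding near_def using LeastI_ex[OF ex] by auto
next
  assume "near E n a b"
  then obtain m where m: "m \<le> n" "(E ^^ m) a b" unfolding near_def by auto
  then have "(LEAST m. (E ^^ m) a b) \<le> m" by (meson Least_le)
  then show "gdist E a b \<le> enat n" using m unfolding gdist_def by auto
qed

lemma gdist_less_iff: "0 < R \<Longrightarrow> gdist E a b < enat R \<longleftrightarrow> near E (R - 1) a b"
proof -
  assume R: "0 < R"
  have "gdist E a b < enat R \<longleftrightarrow> gdist E a b \<le> enat (R - 1)"
    using R by (cases "gdist E a b") auto
  then show ?thesis using gdist_le_iff by metis
qed

lemma near_refl: "near E n a a"
  unfolding near_def by (rule exI[of _ 0]) auto

lemma near_mono: "near E n a b \<Longrightarrow> n \<le> m \<Longrightarrow> near E m a b"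
  unfolding near_def by (meson order_trans)

lemma near_trans: "near E n a b \<Longrightarrow> near E m b c \<Longrightarrow> near E (n + m) a c"
  unfolding near_def by (meson add_mono relpowp_trans)

lemma relpowp_sym: "(\<forall>a b. E a b \<longrightarrow> E b a) \<Longrightarrow> (E ^^ n) a b \<Longrightarrow> (E ^^ n) b a"
proof (induction n arbitrary: a b)
  case 0 then show ?case by auto
next
  case (Suc n)
  from Suc.prems(2) obtain y where "(E ^^ n) a y" "E y b" by (rule relpowp_Suc_E)
  then show ?case using Suc by (meson relpowp_Suc_I2)
qed

lemma near_sym: "simple_graph E \<Longrightarrow> near E n a b \<Longrightarrow> near E n b a"
  unfolding near_def simple_graph_def using relpowp_sym by metis

lemma near_edge: "E a b \<Longrightarrow> near E 1 a b"
  unfolding near_def by (rule exI[of _ 1]) auto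

lemma near_0: "near E 0 a b \<longleftrightarrow> a = b"
  unfolding near_def by auto

lemma diam_le:
  fixes E :: "'v::finite \<Rightarrow> 'v \<Rightarrow> bool"
  assumes "X \<noteq> {}" "\<forall>a\<in>X. \<forall>b\<in>X. near E D a b"
  shows "diam E X \<le> enat (D + 1)"
proof -
  let ?S = "{gdist E i j | i j. i \<in> X \<and> j \<in> X}"
  have fin: "finite ?S"
  proof -
    have "?S \<subseteq> (\<lambda>(i,j). gdist E i j) ` UNIV" by auto
    then show ?thesis by (rule finite_subset) simp
  qed
  have ne: "?S \<noteq> {}" using assms(1) by auto
  have "Max ?S \<le> enat D" using fin ne assms(2) by (auto simp: Max_le_iff gdist_le_iff)
  then have "1 + Max ?S \<le> 1 + enat D" by (rule add_left_mono)
  then show ?thesis unfolding diam_def by (simp add: one_enat_def)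
qed



lemma supported_iff:
  "supported_in Op X \<longleftrightarrow> (\<forall>x y. Op x y = (if x - X = y - X then Op (x \<inter> X) (y \<inter> X) else 0))"
proof
  assume "supported_in Op X"
  then obtain A where A: "\<forall>x y. Op x y = (if x - X = y - X then A (x \<inter> X) (y \<inter> X) else 0)"
    unfolding supported_in_def by blast
  show "\<forall>x y. Op x y = (if x - X = y - X then Op (x \<inter> X) (y \<inter> X) else 0)"
  proof (intro allI)
    fix x y
    have "Op (x \<inter> X) (y \<inter> X) = A (x \<inter> X) (y \<inter> X)"
      using A[rule_format, of "x \<inter> X" "y \<inter> X"] by (simp add: Int_assoc Diff_eq)
    then show "Op x y = (if x - X = y - X then Op (x \<inter> X) (y \<inter> X) else 0)" using A by simp
  qed
next
  assume "\<forall>x y. Op x y = (if x - X = y - X then Op (x \<inter> X) (y \<inter> X) else 0)"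
  then show "supported_in Op X" unfolding supported_in_def by blast
qed

lemma supported_mono:
  assumes "supported_in Op X" "X \<subseteq> Y"
  shows "supported_in Op Y"
proof -
  have h: "\<And>x y. Op x y = (if x - X = y - X then Op (x \<inter> X) (y \<inter> X) else 0)"
    using assms(1) supported_iff by metis
  show ?thesis unfolding supported_iff
  proof (intro allI)
    fix x y
    show "Op x y = (if x - Y = y - Y then Op (x \<inter> Y) (y \<inter> Y) else 0)"
    proof (cases "x - Y = y - Y")
      case True
      have e1: "x \<inter> Y \<inter> X = x \<inter> X" "y \<inter> Y \<inter> X = y \<inter> X" using assms(2) by auto
      have e2: "(x \<inter> Y - X = y \<inter> Y - X) \<longleftrightarrow> (x - X = y - X)" using True by blast
      show ?thesis using h[of x y] h[of "x \<inter> Y" "y \<inter> Y"] True e1 e2 by simp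
    next
      case False
      then have "x - X \<noteq> y - X" using assms(2) by blast
      then show ?thesis using h[of x y] False by simp
    qed
  qed
qed

lemma supported_add:
  "supported_in Op1 X \<Longrightarrow> supported_in Op2 X \<Longrightarrow> supported_in (\<lambda>x y. Op1 x y + Op2 x y) X"
  unfolding supported_iff by (metis add.right_neutral)

lemma supported_scale:
  "supported_in Op1 X \<Longrightarrow> supported_in (\<lambda>x y. a * Op1 x y) X"
  unfolding supported_iff by (metis mult_zero_right)

lemma supported_zero: "supported_in (\<lambda>x y. 0) X"
  unfolding supported_iff by simp

lemma supported_diff:
  "supported_in Op1 X \<Longrightarrow> supported_in Op2 X \<Longrightarrow> supported_in (\<lambda>x y. Op1 x y - Op2 x y) X"
  unfolding supported_iff by (metis diff_zero)

lemma supported_sum: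
  assumes "finite S" "\<forall>s\<in>S. supported_in (f s) X"
  shows "supported_in (\<lambda>x y. \<Sum>s\<in>S. f s x y) X"
  using assms
proof (induction S rule: finite_induct)
  case empty then show ?case by (simp add: supported_zero)
next
  case (insert s S)
  then show ?case using supported_add[of "f s" X "\<lambda>x y. \<Sum>s\<in>S. f s x y"] by simp
qed

lemma nstr_supported: "supported_in (nstr J K) (J \<union> K)"
  unfolding supported_iff nstr_def by (intro allI) (auto; blast)



lemma sum_pow_sign:
  assumes "finite A"
  shows "(\<Sum>T\<in>Pow A. (-1::complex) ^ card T) = (if A = {} then 1 else 0)"
proof -
  have "(\<Prod>x\<in>A. (1::complex) - 1) = (\<Sum>X\<in>Pow A. (-1) ^ card X * (\<Prod>x\<in>X. 1) * (\<Prod>x\<in>A-X. 1))"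
    by (rule prod_diff_conv_sum[OF assms])
  then have "(\<Sum>T\<in>Pow A. (-1::complex) ^ card T) = 0 ^ card A" by simp
  then show ?thesis using assms by (simp add: card_gt_0_iff)
qed

lemma nstr_unit:
  fixes Z :: "'v::finite set"
  assumes "a \<subseteq> Z" "b \<subseteq> Z"
  shows "(\<Sum>T\<in>Pow (Z - (a \<union> b)). (-1::complex) ^ card T * nstr (a \<union> T) (b \<union> T) x y)
        = (if x \<inter> Z = a \<and> y \<inter> Z = b \<and> x - Z = y - Z then 1 else 0)"
proof -
  define Cnd where "Cnd \<longleftrightarrow> b \<subseteq> y \<and> a \<inter> (y - b) = {} \<and> x = (y - b) \<union> a"
  have e: "nstr (a \<union> T) (b \<union> T) x y = (if T \<subseteq> y \<and> Cnd then 1 else 0)"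
    if "T \<in> Pow (Z - (a \<union> b))" for T
    using that unfolding nstr_def Cnd_def by auto
  have "(\<Sum>T\<in>Pow (Z - (a \<union> b)). (-1::complex) ^ card T * nstr (a \<union> T) (b \<union> T) x y)
      = (\<Sum>T\<in>Pow (Z - (a \<union> b)). (if T \<subseteq> y \<and> Cnd then (-1::complex) ^ card T else 0))"
    by (rule sum.cong) (auto simp: e)
  also have "\<dots> = (if Cnd then (\<Sum>T\<in>{T \<in> Pow (Z - (a \<union> b)). T \<subseteq> y}. (-1::complex) ^ card T) else 0)"
    by (auto simp: sum.inter_filter[symmetric])
  also have "{T \<in> Pow (Z - (a \<union> b)). T \<subseteq> y} = Pow ((Z - (a \<union> b)) \<inter> y)" by auto
  also have "(if Cnd then (\<Sum>T\<in>Pow ((Z - (a \<union> b)) \<inter> y). (-1::complex) ^ card T) else 0)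
      = (if Cnd \<and> (Z - (a \<union> b)) \<inter> y = {} then 1 else 0)"
  proof -
    have s: "(\<Sum>T\<in>Pow ((Z - (a \<union> b)) \<inter> y). (-1::complex) ^ card T) = (if (Z - (a \<union> b)) \<inter> y = {} then 1 else 0)"
      by (rule sum_pow_sign) simp
    show ?thesis by (simp only: s) simp
  qed
  also have "(Cnd \<and> (Z - (a \<union> b)) \<inter> y = {}) \<longleftrightarrow> (x \<inter> Z = a \<and> y \<inter> Z = b \<and> x - Z = y - Z)"
  proof
    assume h: "Cnd \<and> (Z - (a \<union> b)) \<inter> y = {}"
    then have h1: "b \<subseteq> y" "a \<inter> (y - b) = {}" "x = (y - b) \<union> a" "(Z - (a \<union> b)) \<inter> y = {}"
      unfolding Cnd_def by auto
    have yZ: "y \<inter> Z = b"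
    proof
      show "y \<inter> Z \<subseteq> b" using h1(2,4) by blast
      show "b \<subseteq> y \<inter> Z" using h1(1) assms(2) by blast
    qed
    have xZ: "x \<inter> Z = a" using h1(3) yZ assms(1) by blast
    have "x - Z = y - Z" using h1(3) yZ assms by blast
    then show "x \<inter> Z = a \<and> y \<inter> Z = b \<and> x - Z = y - Z" using xZ yZ by simp
  next
    assume h: "x \<inter> Z = a \<and> y \<inter> Z = b \<and> x - Z = y - Z"
    have "b \<subseteq> y" using h by blast
    moreover have "a \<inter> (y - b) = {}" using h by blast
    moreover have "x = (y - b) \<union> a"
    proof -
      have "x = (x - Z) \<union> (x \<inter> Z)" by blast
      also have "\<dots> = (y - Z) \<union> a" using h by simp
      also have "y - Z = y - b" using h by blast
      finally show ?thesis .
    qed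
    moreover have "(Z - (a \<union> b)) \<inter> y = {}" using h by blast
    ultimately show "Cnd \<and> (Z - (a \<union> b)) \<inter> y = {}" unfolding Cnd_def by blast
  qed
  finally show ?thesis .
qed

lemma supported_expand:
  fixes Op :: "'v::finite qop"
  assumes "supported_in Op Z"
  shows "\<exists>e. Op = (\<lambda>x y. \<Sum>J\<in>UNIV. \<Sum>K\<in>UNIV. e J K * nstr J K x y) \<and>
             (\<forall>J K. e J K \<noteq> 0 \<longrightarrow> J \<union> K \<subseteq> Z)"
proof -
  define S3 :: "('v set \<times> 'v set \<times> 'v set) set" where "S3 = {p. fst p \<subseteq> Z \<and> fst (snd p) \<subseteq> Z \<and> snd (snd p) \<subseteq> Z - (fst p \<union> fst (snd p))}"
  define phi :: "'v set \<times> 'v set \<times> 'v set \<Rightarrow> 'v set \<times> 'v set" where "phi = (\<lambda>p. (fst p \<union> snd (snd p), fst (snd p) \<union> snd (snd p)))"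
  define g3 :: "'v set \<times> 'v set \<times> 'v set \<Rightarrow> complex" where "g3 = (\<lambda>p. Op (fst p) (fst (snd p)) * (-1::complex) ^ card (snd (snd p)))"
  define e where "e J K = (\<Sum>p\<in>{p \<in> S3. phi p = (J, K)}. g3 p)" for J K
  have hO: "\<And>x y. Op x y = (if x - Z = y - Z then Op (x \<inter> Z) (y \<inter> Z) else 0)"
    using assms supported_iff by metis
  have step1: "Op x y = (\<Sum>a\<in>Pow Z. \<Sum>b\<in>Pow Z. Op a b * (if x \<inter> Z = a \<and> y \<inter> Z = b \<and> x - Z = y - Z then 1 else 0))"
    for x y
  proof -
    have "(\<Sum>a\<in>Pow Z. \<Sum>b\<in>Pow Z. Op a b * (if x \<inter> Z = a \<and> y \<inter> Z = b \<and> x - Z = y - Z then 1 else 0))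
        = (\<Sum>a\<in>Pow Z. if a = x \<inter> Z then (\<Sum>b\<in>Pow Z. Op a b * (if y \<inter> Z = b \<and> x - Z = y - Z then 1 else 0)) else 0)"
      by (rule sum.cong) auto
    also have "\<dots> = (\<Sum>b\<in>Pow Z. Op (x \<inter> Z) b * (if y \<inter> Z = b \<and> x - Z = y - Z then 1 else 0))"
      by (simp add: sum.delta)
    also have "\<dots> = (\<Sum>b\<in>Pow Z. if b = y \<inter> Z then Op (x \<inter> Z) b * (if x - Z = y - Z then 1 else 0) else 0)"
      by (rule sum.cong) auto
    also have "\<dots> = Op (x \<inter> Z) (y \<inter> Z) * (if x - Z = y - Z then 1 else 0)"
      by (simp add: sum.delta)
    finally show ?thesis using hO[of x y] by simp
  qed
  have step2: "Op x y = (\<Sum>p\<in>S3. g3 p * nstr (fst (phi p)) (snd (phi p)) x y)" for x y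
  proof -
    have "Op x y = (\<Sum>a\<in>Pow Z. \<Sum>b\<in>Pow Z. \<Sum>T\<in>Pow (Z - (a \<union> b)). Op a b * ((-1::complex) ^ card T * nstr (a \<union> T) (b \<union> T) x y))"
      unfolding step1[of x y]
      by (intro sum.cong refl) (simp add: nstr_unit[symmetric] sum_distrib_left)
    also have "\<dots> = (\<Sum>(a,b)\<in>Pow Z \<times> Pow Z. \<Sum>T\<in>Pow (Z - (a \<union> b)). Op a b * ((-1::complex) ^ card T * nstr (a \<union> T) (b \<union> T) x y))"
      by (simp add: sum.cartesian_product)
    also have "\<dots> = (\<Sum>(ab,T)\<in>(SIGMA ab:Pow Z \<times> Pow Z. Pow (Z - (fst ab \<union> snd ab))). Op (fst ab) (snd ab) * ((-1::complex) ^ card T * nstr (fst ab \<union> T) (snd ab \<union> T) x y))"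
      by (subst sum.Sigma[symmetric]) (auto simp: split_def)
    also have "\<dots> = (\<Sum>p\<in>S3. g3 p * nstr (fst (phi p)) (snd (phi p)) x y)"
      apply (rule sum.reindex_bij_witness[where i="\<lambda>p. ((fst p, fst (snd p)), snd (snd p))" and j="\<lambda>q. (fst (fst q), snd (fst q), snd q)"])
      subgoal by (simp add: S3_def)
      subgoal by (auto simp: S3_def)
      subgoal by simp
      subgoal by (auto simp: S3_def)
      subgoal by (simp add: g3_def phi_def mult.assoc split_def)
      done
    finally show ?thesis .
  qed
  have step3: "(\<Sum>p\<in>S3. g3 p * nstr (fst (phi p)) (snd (phi p)) x y)
      = (\<Sum>JK\<in>UNIV. e (fst JK) (snd JK) * nstr (fst JK) (snd JK) x y)" for x y
  proof -
    have "(\<Sum>p\<in>S3. g3 p * nstr (fst (phi p)) (snd (phi p)) x y)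
        = (\<Sum>JK\<in>UNIV. \<Sum>p\<in>{p \<in> S3. phi p = JK}. g3 p * nstr (fst (phi p)) (snd (phi p)) x y)"
      by (rule sum.group[symmetric]) auto
    also have "\<dots> = (\<Sum>JK\<in>UNIV. e (fst JK) (snd JK) * nstr (fst JK) (snd JK) x y)"
      unfolding e_def by (intro sum.cong refl) (simp add: sum_distrib_right)
    finally show ?thesis .
  qed
  have "Op = (\<lambda>x y. \<Sum>J\<in>UNIV. \<Sum>K\<in>UNIV. e J K * nstr J K x y)"
  proof (intro ext)
    fix x y
    show "Op x y = (\<Sum>J\<in>UNIV. \<Sum>K\<in>UNIV. e J K * nstr J K x y)"
    proof -
      have "(\<Sum>J\<in>UNIV. \<Sum>K\<in>UNIV. e J K * nstr J K x y) = (\<Sum>JK\<in>UNIV \<times> UNIV. e (fst JK) (snd JK) * nstr (fst JK) (snd JK) x y)"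
        by (subst sum.cartesian_product') (simp only: fst_conv snd_conv)
      then show ?thesis unfolding step2 step3 by simp
    qed
  qed
  moreover have "\<forall>J K. e J K \<noteq> 0 \<longrightarrow> J \<union> K \<subseteq> Z"
  proof (intro allI impI)
    fix J K assume ne: "e J K \<noteq> 0"
    have "{p \<in> S3. phi p = (J, K)} \<noteq> {}"
    proof
      assume "{p \<in> S3. phi p = (J, K)} = {}"
      then have "e J K = 0" unfolding e_def by (simp only: sum.empty)
      then show False using ne by simp
    qed
    then obtain a b T where abT: "(a, b, T) \<in> S3" "phi (a, b, T) = (J, K)" by auto
    then show "J \<union> K \<subseteq> Z" unfolding S3_def phi_def by auto
  qed
  ultimately show ?thesis by blast
qed



lemma range_from_supported:
  fixes f :: "'a \<Rightarrow> 'v::finite qop"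
  assumes "finite S" "\<forall>s\<in>S. supported_in (f s) (Z s) \<and> (\<forall>a\<in>Z s. \<forall>b\<in>Z s. near E D a b)"
  shows "range_le E (\<lambda>x y. \<Sum>s\<in>S. f s x y) (D + 1)"
proof -
  have "\<forall>s\<in>S. \<exists>e. f s = (\<lambda>x y. \<Sum>J\<in>UNIV. \<Sum>K\<in>UNIV. e J K * nstr J K x y) \<and>
             (\<forall>J K. e J K \<noteq> 0 \<longrightarrow> J \<union> K \<subseteq> Z s)"
    using assms(2) supported_expand by blast
  then have "\<exists>e. \<forall>s\<in>S. f s = (\<lambda>x y. \<Sum>J\<in>UNIV. \<Sum>K\<in>UNIV. e s J K * nstr J K x y) \<and>
             (\<forall>J K. e s J K \<noteq> 0 \<longrightarrow> J \<union> K \<subseteq> Z s)" by (rule bchoice)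
  then obtain e where e: "\<forall>s\<in>S. f s = (\<lambda>x y. \<Sum>J\<in>UNIV. \<Sum>K\<in>UNIV. e s J K * nstr J K x y) \<and>
             (\<forall>J K. e s J K \<noteq> 0 \<longrightarrow> J \<union> K \<subseteq> Z s)"
    by (rule exE)
  define ec where "ec J K = (\<Sum>s\<in>S. e s J K)" for J K
  have eq: "(\<lambda>x y. \<Sum>s\<in>S. f s x y) = (\<lambda>x y. \<Sum>J\<in>UNIV. \<Sum>K\<in>UNIV. ec J K * nstr J K x y)"
  proof (intro ext)
    fix x y
    have "(\<Sum>s\<in>S. f s x y) = (\<Sum>s\<in>S. \<Sum>J\<in>UNIV. \<Sum>K\<in>UNIV. e s J K * nstr J K x y)"
      using e by (intro sum.cong refl) simp
    also have "\<dots> = (\<Sum>J\<in>UNIV. \<Sum>s\<in>S. \<Sum>K\<in>UNIV. e s J K * nstr J K x y)"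
      by (rule sum.swap)
    also have "\<dots> = (\<Sum>J\<in>UNIV. \<Sum>K\<in>UNIV. \<Sum>s\<in>S. e s J K * nstr J K x y)"
      by (intro sum.cong refl) (rule sum.swap)
    also have "\<dots> = (\<Sum>J\<in>UNIV. \<Sum>K\<in>UNIV. ec J K * nstr J K x y)"
      unfolding ec_def by (simp add: sum_distrib_right)
    finally show "(\<Sum>s\<in>S. f s x y) = (\<Sum>J\<in>UNIV. \<Sum>K\<in>UNIV. ec J K * nstr J K x y)" .
  qed
  have rng: "string_range_le E J K (D + 1)" if "ec J K \<noteq> 0" for J K
  proof -
    have "\<exists>s\<in>S. e s J K \<noteq> 0"
    proof (rule ccontr)
      assume "\<not> (\<exists>s\<in>S. e s J K \<noteq> 0)"
      then have "ec J K = 0" unfolding ec_def by (intro sum.neutral) blast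
      then show False using that by simp
    qed
    then obtain s where s: "s \<in> S" "e s J K \<noteq> 0" by blast
    then have sub: "J \<union> K \<subseteq> Z s" using e by blast
    show ?thesis unfolding string_range_le_def
    proof (intro conjI ballI)
      fix a b assume "a \<in> J \<union> K" "b \<in> J \<union> K"
      then have "near E D a b" using sub assms(2) s(1) by blast
      then show "gdist E a b < enat (D + 1)" using gdist_less_iff[of "D+1" E a b] by simp
    qed simp
  qed
  show ?thesis unfolding range_le_def using eq rng by blast
qed

lemma range_le_terms:
  fixes Op :: "'v::finite qop"
  assumes "range_le E Op R"
  obtains cc where "Op = (\<lambda>x y. \<Sum>J\<in>UNIV. \<Sum>K\<in>UNIV. cc J K * nstr J K x y)"
    "\<And>J K. cc J K \<noteq> 0 \<Longrightarrow> 0 < R \<and> (\<forall>a\<in>J \<union> K. \<forall>b\<in>J \<union> K. near E (R - 1) a b)"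
proof -
  obtain cc where cc: "Op = (\<lambda>x y. \<Sum>J\<in>UNIV. \<Sum>K\<in>UNIV. cc J K * nstr J K x y)"
    "\<forall>J K. cc J K \<noteq> 0 \<longrightarrow> string_range_le E J K R"
    using assms unfolding range_le_def by blast
  show ?thesis
  proof (rule that[OF cc(1)])
    fix J K assume "cc J K \<noteq> 0"
    then have "string_range_le E J K R" using cc(2) by blast
    then show "0 < R \<and> (\<forall>a\<in>J \<union> K. \<forall>b\<in>J \<union> K. near E (R - 1) a b)"
      unfolding string_range_le_def using gdist_less_iff by metis
  qed
qed

lemma app_vac: "app Op vac x = Op x {}"
proof -
  have "app Op vac x = (\<Sum>y\<in>UNIV. if y = {} then Op x y else 0)"
    unfolding app_def vac_def by (intro sum.cong) auto
  then show ?thesis by simp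
qed

lemma app_add: "app (\<lambda>x y. A x y + B x y) \<psi> = (\<lambda>x. app A \<psi> x + app B \<psi> x)"
  unfolding app_def by (simp add: distrib_right sum.distrib)

lemma app_diff: "app (\<lambda>x y. A x y - B x y) \<psi> = (\<lambda>x. app A \<psi> x - app B \<psi> x)"
  unfolding app_def by (simp add: left_diff_distrib sum_subtractf)

lemma app_scale: "app (\<lambda>x y. a * A x y) \<psi> = (\<lambda>x. a * app A \<psi> x)"
  unfolding app_def by (simp add: sum_distrib_left mult.assoc)

lemma app_sum: "app (\<lambda>x y. \<Sum>s\<in>S. A s x y) \<psi> = (\<lambda>x. \<Sum>s\<in>S. app (A s) \<psi> x)"
  unfolding app_def by (simp add: sum_distrib_right sum.swap[of _ S])



definition qstate :: "('v \<Rightarrow> 'v set) \<Rightarrow> 'v state" where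
  "qstate I = (\<lambda>x. if x \<in> range I then 1 else 0)"

definition good :: "('v::finite \<Rightarrow> 'v set) \<Rightarrow> 'v qop \<Rightarrow> 'v set \<Rightarrow> bool" where
  "good I h X \<longleftrightarrow> supported_in h X \<and> app h (qstate I) = (\<lambda>_. 0) \<and> app h vac = (\<lambda>_. 0)"

definition smallset :: "('v \<Rightarrow> 'v \<Rightarrow> bool) \<Rightarrow> nat \<Rightarrow> 'v set \<Rightarrow> bool" where
  "smallset E D X \<longleftrightarrow> X \<noteq> {} \<and> diam E X \<le> enat D"

definition LD :: "('v::finite \<Rightarrow> 'v \<Rightarrow> bool) \<Rightarrow> ('v \<Rightarrow> 'v set) \<Rightarrow> nat \<Rightarrow> 'v qop \<Rightarrow> bool" where
  "LD E I D Op \<longleftrightarrow> (\<exists>h. (\<forall>X. smallset E D X \<longrightarrow> good I (h X) X) \<and>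
      Op = (\<lambda>x y. \<Sum>X\<in>{X. smallset E D X}. h X x y))"

definition gop :: "'v set \<Rightarrow> 'v set \<Rightarrow> 'v set \<Rightarrow> 'v qop" where
  "gop Z a b = (\<lambda>x y. if y \<inter> Z = a \<and> x = (y - Z) \<union> b then 1 else 0)"

lemma app_zero: "app (\<lambda>x y. 0) \<psi> = (\<lambda>_. 0)"
  unfolding app_def by simp

lemma good_zero: "good I (\<lambda>x y. 0) X"
  unfolding good_def by (simp add: supported_zero app_zero)

lemma good_add: "good I A X \<Longrightarrow> good I B X \<Longrightarrow> good I (\<lambda>x y. A x y + B x y) X"
  unfolding good_def by (simp add: supported_add app_add)

lemma good_scale: "good I A X \<Longrightarrow> good I (\<lambda>x y. a * A x y) X"
  unfolding good_def by (simp add: supported_scale app_scale)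

lemma LD_zero: "LD E I D (\<lambda>x y. 0)"
  unfolding LD_def by (rule exI[of _ "\<lambda>X x y. 0"]) (simp add: good_zero)

lemma LD_add:
  assumes "LD E I D A" "LD E I D B"
  shows "LD E I D (\<lambda>x y. A x y + B x y)"
proof -
  obtain h1 where h1: "\<forall>X. smallset E D X \<longrightarrow> good I (h1 X) X" "A = (\<lambda>x y. \<Sum>X\<in>{X. smallset E D X}. h1 X x y)"
    using assms(1) unfolding LD_def by blast
  obtain h2 where h2: "\<forall>X. smallset E D X \<longrightarrow> good I (h2 X) X" "B = (\<lambda>x y. \<Sum>X\<in>{X. smallset E D X}. h2 X x y)"
    using assms(2) unfolding LD_def by blast
  show ?thesis unfolding LD_def
    by (rule exI[of _ "\<lambda>X x y. h1 X x y + h2 X x y"]) (simp add: h1 h2 good_add sum.distrib)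
qed

lemma LD_scale:
  assumes "LD E I D A"
  shows "LD E I D (\<lambda>x y. a * A x y)"
proof -
  obtain h1 where h1: "\<forall>X. smallset E D X \<longrightarrow> good I (h1 X) X" "A = (\<lambda>x y. \<Sum>X\<in>{X. smallset E D X}. h1 X x y)"
    using assms(1) unfolding LD_def by blast
  show ?thesis unfolding LD_def
    by (rule exI[of _ "\<lambda>X x y. a * h1 X x y"]) (simp add: h1 good_scale sum_distrib_left)
qed

lemma LD_diff:
  assumes "LD E I D A" "LD E I D B"
  shows "LD E I D (\<lambda>x y. A x y - B x y)"
  using LD_add[OF assms(1) LD_scale[OF assms(2), of "-1"]] by simp

lemma LD_sum:
  assumes "finite S" "\<forall>s\<in>S. LD E I D (A s)"
  shows "LD E I D (\<lambda>x y. \<Sum>s\<in>S. A s x y)"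
  using assms
proof (induction S rule: finite_induct)
  case empty then show ?case by (simp add: LD_zero)
next
  case (insert s S)
  then show ?case using LD_add[of E I D "A s" "\<lambda>x y. \<Sum>s\<in>S. A s x y"] by simp
qed

lemma LD_single:
  fixes Op :: "'v::finite qop"
  assumes "good I Op X" "smallset E D X"
  shows "LD E I D Op"
  unfolding LD_def
proof (rule exI[of _ "\<lambda>Y x y. if Y = X then Op x y else 0"], intro conjI allI impI)
  fix Y assume "smallset E D Y"
  show "good I (\<lambda>x y. if Y = X then Op x y else 0) Y"
    using assms(1) good_zero by (cases "Y = X") auto
next
  have fin: "finite {X. smallset E D X}" by simp
  show "Op = (\<lambda>x y. \<Sum>Y\<in>{X. smallset E D X}. if Y = X then Op x y else 0)"
    using assms(2) by (simp add: sum.delta'[OF fin])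
qed

lemma gop_supported:
  assumes "b \<subseteq> Z"
  shows "supported_in (gop Z a b) Z"
  unfolding supported_iff gop_def using assms by (intro allI) (auto; blast)

lemma app_gop_vac: "a \<noteq> {} \<Longrightarrow> app (gop Z a b) vac = (\<lambda>_. 0)"
  by (rule ext) (simp add: app_vac gop_def)

lemma app_qstate:
  assumes "inj I"
  shows "app Op (qstate I) x = (\<Sum>i\<in>UNIV. Op x (I i))"
proof -
  have "app Op (qstate I) x = (\<Sum>y\<in>UNIV. if y \<in> range I then Op x y else 0)"
    unfolding app_def qstate_def by (intro sum.cong) auto
  also have "\<dots> = (\<Sum>y\<in>range I. Op x y)"
    by (simp add: sum.inter_filter[symmetric])
  also have "\<dots> = (\<Sum>i\<in>UNIV. Op x (I i))"
    using assms by (simp add: sum.reindex)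
  finally show ?thesis .
qed



locale qsetup =
  fixes E :: "'v::finite \<Rightarrow> 'v \<Rightarrow> bool" and I :: "'v \<Rightarrow> 'v set" and c d :: nat
  assumes graph: "simple_graph E" and c_gt: "1 < c" and card_I: "\<And>i. card (I i) = c"
    and nearI: "\<And>i j. j \<in> I i \<Longrightarrow> near E d j i" and inj_I: "inj I"
begin

lemma I_ne: "I i \<noteq> {}"
  using card_I[of i] c_gt by auto

lemma I_sub_eq: "I l \<subseteq> I m \<Longrightarrow> l = m"
proof -
  assume "I l \<subseteq> I m"
  then have "I l = I m" by (intro card_subset_eq) (simp_all add: card_I)
  then show "l = m" using inj_I by (simp add: inj_eq)
qed

lemma near_in_I: "a \<in> I l \<Longrightarrow> b \<in> I l \<Longrightarrow> near E (2 * d) a b"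
proof -
  assume "a \<in> I l" "b \<in> I l"
  then have "near E d a l" "near E d l b" using nearI near_sym[OF graph] by blast+
  then show ?thesis using near_trans by (metis mult_2)
qed

lemma app_gop_q:
  assumes "I l \<subseteq> Z"
  shows "app (gop Z (I l) b) (qstate I) x = (if x = b then 1 else 0)"
proof -
  have "app (gop Z (I l) b) (qstate I) x = (\<Sum>m\<in>UNIV. gop Z (I l) b x (I m))"
    by (rule app_qstate[OF inj_I])
  also have "\<dots> = (\<Sum>m\<in>UNIV. if m = l then gop Z (I l) b x (I l) else 0)"
  proof (intro sum.cong refl)
    fix m
    show "gop Z (I l) b x (I m) = (if m = l then gop Z (I l) b x (I l) else 0)"
    proof (cases "m = l")
      case False
      have "I m \<inter> Z \<noteq> I l"
      proof
        assume "I m \<inter> Z = I l"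
        then have "I l \<subseteq> I m" by blast
        then show False using I_sub_eq False by blast
      qed
      then show ?thesis using False unfolding gop_def by simp
    qed simp
  qed
  also have "\<dots> = gop Z (I l) b x (I l)" by simp
  also have "\<dots> = (if x = b then 1 else 0)"
    using assms unfolding gop_def by (simp add: Int_absorb2 Diff_eq_empty_iff[THEN iffD2])
  finally show ?thesis .
qed

definition Lv :: "'v set \<Rightarrow> 'v set \<Rightarrow> 'v set" where
  "Lv J K = {l. K \<subseteq> I l \<and> J \<inter> (I l - K) = {}}"

definition tg :: "'v set \<Rightarrow> 'v set \<Rightarrow> 'v \<Rightarrow> 'v set" where
  "tg J K l = (I l - K) \<union> J"

definition Gop :: "'v set \<Rightarrow> 'v set \<Rightarrow> 'v \<Rightarrow> 'v qop" where
  "Gop J K l = gop (I l \<union> J \<union> K) (I l) (tg J K l)"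

lemma app_nstr_q:
  "app (nstr J K) (qstate I) x = (\<Sum>l\<in>Lv J K. if x = tg J K l then 1 else 0)"
proof -
  have "app (nstr J K) (qstate I) x = (\<Sum>m\<in>UNIV. nstr J K x (I m))"
    by (rule app_qstate[OF inj_I])
  also have "\<dots> = (\<Sum>m\<in>UNIV. if m \<in> Lv J K then (if x = tg J K m then 1 else 0) else 0)"
    unfolding nstr_def Lv_def tg_def by (intro sum.cong refl) auto
  also have "\<dots> = (\<Sum>l\<in>Lv J K. if x = tg J K l then 1 else 0)"
    by (simp add: sum.inter_filter[symmetric])
  finally show ?thesis .
qed

lemma app_Gop_q: "l \<in> Lv J K \<Longrightarrow> app (Gop J K l) (qstate I) x = (if x = tg J K l then 1 else 0)"
  unfolding Gop_def by (rule app_gop_q) blast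

lemma app_Gop_vac: "app (Gop J K l) vac = (\<lambda>_. 0)"
  unfolding Gop_def by (rule app_gop_vac[OF I_ne])

lemma Gop_supported: "supported_in (Gop J K l) (I l \<union> J \<union> K)"
  unfolding Gop_def tg_def by (rule gop_supported) blast

definition loc :: "nat \<Rightarrow> 'v set \<Rightarrow> 'v set \<Rightarrow> bool" where
  "loc r J K \<longleftrightarrow> K \<noteq> {} \<and> (\<forall>a\<in>J \<union> K. \<forall>b\<in>J \<union> K. near E r a b)"

lemma zone:
  assumes "loc r J K" "l \<in> Lv J K" "a \<in> I l \<union> J \<union> K" "b \<in> I l \<union> J \<union> K"
  shows "near E (r + 2 * d) a b"
proof -
  obtain k0 where k0: "k0 \<in> K" using assms(1) unfolding loc_def by blast
  have KI: "K \<subseteq> I l" using assms(2) unfolding Lv_def by blast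
  have JK: "\<And>a b. a \<in> J \<union> K \<Longrightarrow> b \<in> J \<union> K \<Longrightarrow> near E r a b" using assms(1) unfolding loc_def by blast
  have II: "\<And>a b. a \<in> I l \<Longrightarrow> b \<in> I l \<Longrightarrow> near E (2 * d) a b" by (rule near_in_I)
  consider "a \<in> J \<union> K" "b \<in> J \<union> K" | "a \<in> I l" "b \<in> I l" | "a \<in> J \<union> K" "b \<in> I l" | "a \<in> I l" "b \<in> J \<union> K"
    using assms(3,4) by blast
  then show ?thesis
  proof cases
    case 1 then show ?thesis using JK near_mono by fastforce
  next
    case 2 then show ?thesis using II near_mono by fastforce
  next
    case 3
    have "near E r a k0" using JK 3 k0 by blast
    moreover have "near E (2 * d) k0 b" using II 3 k0 KI by blast
    ultimately show ?thesis by (rule near_trans)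
  next
    case 4
    have "near E (2 * d) a k0" using II 4 k0 KI by blast
    moreover have "near E r k0 b" using JK 4 k0 by blast
    ultimately have "near E (2 * d + r) a b" by (rule near_trans)
    then show ?thesis by (simp add: add.commute)
  qed
qed

end



context qsetup
begin

definition Pop :: "'v set \<Rightarrow> 'v set \<Rightarrow> 'v qop" where
  "Pop J K = (\<lambda>x y. nstr J K x y - (\<Sum>l\<in>Lv J K. Gop J K l x y))"

definition XP :: "'v set \<Rightarrow> 'v set \<Rightarrow> 'v set" where
  "XP J K = J \<union> K \<union> (\<Union>l\<in>Lv J K. I l)"

lemma small_of_near:
  assumes "X \<noteq> {}" "\<forall>a\<in>X. \<forall>b\<in>X. near E n a b" "n + 1 \<le> D"
  shows "smallset E D X"
proof -
  have "diam E X \<le> enat (n + 1)" by (rule diam_le[OF assms(1,2)])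
  also have "\<dots> \<le> enat D" using assms(3) by simp
  finally show ?thesis unfolding smallset_def using assms(1) by simp
qed

lemma Pop_LD:
  assumes "loc r J K" "2 * r + 4 * d + 1 \<le> D"
  shows "LD E I D (Pop J K)"
proof (rule LD_single)
  obtain k0 where k0: "k0 \<in> K" using assms(1) unfolding loc_def by blast
  have toK: "near E (r + 2 * d) a k0" if aX: "a \<in> XP J K" for a
  proof -
    consider "a \<in> J \<union> K" | l where "l \<in> Lv J K" "a \<in> I l" using aX unfolding XP_def by auto
    then show ?thesis
    proof cases
      case 1 then show ?thesis using assms(1) k0 near_mono unfolding loc_def by fastforce
    next
      case 2 then show ?thesis using zone[OF assms(1) 2(1), of a k0] k0 by blast
    qed
  qed
  have pw: "\<forall>a\<in>XP J K. \<forall>b\<in>XP J K. near E (2 * r + 4 * d) a b"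
  proof (intro ballI)
    fix a b assume "a \<in> XP J K" "b \<in> XP J K"
    then have "near E (r + 2 * d) a k0" "near E (r + 2 * d) k0 b"
      using toK near_sym[OF graph] by blast+
    then have "near E ((r + 2 * d) + (r + 2 * d)) a b" by (rule near_trans)
    then show "near E (2 * r + 4 * d) a b" by (simp add: algebra_simps)
  qed
  show "smallset E D (XP J K)"
    by (rule small_of_near[OF _ pw]) (use k0 assms(2) in \<open>auto simp: XP_def\<close>)
  have sup: "supported_in (Pop J K) (XP J K)"
    unfolding Pop_def
  proof (rule supported_diff)
    show "supported_in (nstr J K) (XP J K)"
      by (rule supported_mono[OF nstr_supported]) (auto simp: XP_def)
    show "supported_in (\<lambda>x y. \<Sum>l\<in>Lv J K. Gop J K l x y) (XP J K)"
    proof (rule supported_sum)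
      show "\<forall>l\<in>Lv J K. supported_in (Gop J K l) (XP J K)"
      proof
        fix l assume "l \<in> Lv J K"
        then have "I l \<union> J \<union> K \<subseteq> XP J K" unfolding XP_def by blast
        then show "supported_in (Gop J K l) (XP J K)" by (rule supported_mono[OF Gop_supported])
      qed
    qed simp
  qed
  have q: "app (Pop J K) (qstate I) = (\<lambda>_. 0)"
    unfolding Pop_def app_diff app_sum by (simp add: app_nstr_q app_Gop_q)
  have v: "app (Pop J K) vac = (\<lambda>_. 0)"
  proof
    fix x
    have "nstr J K x {} = 0" using assms(1) unfolding nstr_def loc_def by auto
    moreover have "Gop J K l x {} = 0" for l
      using I_ne unfolding Gop_def gop_def by auto
    ultimately show "app (Pop J K) vac x = 0" by (simp add: app_vac Pop_def)
  qed
  show "good I (Pop J K) (XP J K)" unfolding good_def using sup q v by simp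
qed

lemma Gop_diff_LD:
  assumes "loc r J1 K1" "l1 \<in> Lv J1 K1" "loc r J2 K2" "l2 \<in> Lv J2 K2"
    "tg J1 K1 l1 = t" "tg J2 K2 l2 = t" "t \<noteq> {}" "2 * r + 4 * d + 1 \<le> D"
  shows "LD E I D (\<lambda>x y. Gop J1 K1 l1 x y - Gop J2 K2 l2 x y)"
proof (rule LD_single)
  define X where "X = (I l1 \<union> J1 \<union> K1) \<union> (I l2 \<union> J2 \<union> K2)"
  obtain p where p: "p \<in> t" using assms(7) by blast
  have p1: "p \<in> I l1 \<union> J1 \<union> K1" using p assms(5) unfolding tg_def by blast
  have p2: "p \<in> I l2 \<union> J2 \<union> K2" using p assms(6) unfolding tg_def by blast
  have toP: "near E (r + 2 * d) a p" if "a \<in> X" for a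
    using that zone[OF assms(1,2) _ p1] zone[OF assms(3,4) _ p2] unfolding X_def by blast
  have pw: "\<forall>a\<in>X. \<forall>b\<in>X. near E (2 * r + 4 * d) a b"
  proof (intro ballI)
    fix a b assume "a \<in> X" "b \<in> X"
    then have "near E (r + 2 * d) a p" "near E (r + 2 * d) p b"
      using toP near_sym[OF graph] by blast+
    then have "near E ((r + 2 * d) + (r + 2 * d)) a b" by (rule near_trans)
    then show "near E (2 * r + 4 * d) a b" by (simp add: algebra_simps)
  qed
  show "smallset E D X"
    by (rule small_of_near[OF _ pw]) (use p1 assms(8) in \<open>auto simp: X_def\<close>)
  have sup: "supported_in (\<lambda>x y. Gop J1 K1 l1 x y - Gop J2 K2 l2 x y) X"
    by (rule supported_diff; rule supported_mono[OF Gop_supported]) (auto simp: X_def)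
  show "good I (\<lambda>x y. Gop J1 K1 l1 x y - Gop J2 K2 l2 x y) X"
    unfolding good_def using sup assms(2,4,5,6)
    by (simp add: app_diff app_Gop_q app_Gop_vac)
qed

definition Aop :: "'v \<Rightarrow> 'v qop" where
  "Aop l = gop (I l) (I l) {}"

lemma Aop_edge_LD:
  assumes "E u l" "2 * d + 2 \<le> D"
  shows "LD E I D (\<lambda>x y. Aop l x y - Aop u x y)"
proof (rule LD_single)
  define X where "X = I l \<union> I u"
  have lu: "near E 1 l u" "near E 1 u l" using near_edge[of E u l, OF assms(1)] near_sym[OF graph] by blast+
  have pw: "\<forall>a\<in>X. \<forall>b\<in>X. near E (2 * d + 1) a b"
  proof (intro ballI)
    fix a b assume ab: "a \<in> X" "b \<in> X"
    show "near E (2 * d + 1) a b"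
    proof -
      consider "a \<in> I l" "b \<in> I l" | "a \<in> I u" "b \<in> I u" | "a \<in> I l" "b \<in> I u" | "a \<in> I u" "b \<in> I l"
        using ab unfolding X_def by blast
      then show ?thesis
      proof cases
        case 1
        have "near E (2 * d) a b" using 1 by (rule near_in_I)
        then show ?thesis by (rule near_mono) simp
      next
        case 2
        have "near E (2 * d) a b" using 2 by (rule near_in_I)
        then show ?thesis by (rule near_mono) simp
      next
        case 3
        have a1: "near E d a l" using 3 nearI by blast
        have a2: "near E d u b" using 3 nearI near_sym[OF graph] by blast
        have "near E (d + 1 + d) a b" by (rule near_trans[OF near_trans[OF a1 lu(1)] a2])
        then show ?thesis by (simp add: mult_2)
      next
        case 4
        have a1: "near E d a u" using 4 nearI by blast
        have a2: "near E d l b" using 4 nearI near_sym[OF graph] by blast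
        have "near E (d + 1 + d) a b" by (rule near_trans[OF near_trans[OF a1 lu(2)] a2])
        then show ?thesis by (simp add: mult_2)
      qed
    qed
  qed
  have Xne: "X \<noteq> {}" using I_ne unfolding X_def by blast
  show "smallset E D X"
    by (rule small_of_near[OF Xne pw]) (use assms(2) in simp)
  have s1: "supported_in (Aop l) X" unfolding Aop_def
    by (rule supported_mono[OF gop_supported]) (auto simp: X_def)
  have s2: "supported_in (Aop u) X" unfolding Aop_def
    by (rule supported_mono[OF gop_supported]) (auto simp: X_def)
  have sup: "supported_in (\<lambda>x y. Aop l x y - Aop u x y) X"
    by (rule supported_diff[OF s1 s2])
  have q: "app (Aop v) (qstate I) x = (if x = {} then 1 else 0)" for v x
    unfolding Aop_def by (rule app_gop_q) simp
  have vv: "app (Aop v) vac = (\<lambda>_. 0)" for v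
    unfolding Aop_def by (rule app_gop_vac[OF I_ne])
  show "good I (\<lambda>x y. Aop l x y - Aop u x y) X"
    unfolding good_def using sup by (simp add: app_diff q vv)
qed

lemma Aop_chain_LD:
  assumes "graph_connected E" "2 * d + 2 \<le> D"
  shows "LD E I D (\<lambda>x y. Aop l x y - Aop l0 x y)"
proof -
  have "gdist E l0 l \<noteq> \<infinity>" using assms(1) unfolding graph_connected_def by blast
  then obtain n where "(E ^^ n) l0 l" unfolding gdist_def by (auto split: if_splits)
  then show ?thesis
  proof (induction n arbitrary: l)
    case 0
    then show ?case using LD_zero by simp
  next
    case (Suc n)
    from Suc.prems obtain u where u: "(E ^^ n) l0 u" "E u l" by (rule relpowp_Suc_E)
    have "LD E I D (\<lambda>x y. (Aop l x y - Aop u x y) + (Aop u x y - Aop l0 x y))"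
      by (rule LD_add[OF Aop_edge_LD[OF u(2) assms(2)] Suc.IH[OF u(1)]])
    then show ?case by simp
  qed
qed

end



lemma LD_ref:
  assumes "finite T" "(\<Sum>\<tau>\<in>T. w \<tau>) = 0" "\<And>\<tau>. \<tau> \<in> T \<Longrightarrow> w \<tau> \<noteq> 0 \<Longrightarrow> LD E I D (\<lambda>x y. G \<tau> x y - ref x y)"
  shows "LD E I D (\<lambda>x y. \<Sum>\<tau>\<in>T. w \<tau> * G \<tau> x y)"
proof -
  have "LD E I D (\<lambda>x y. \<Sum>\<tau>\<in>T. w \<tau> * (G \<tau> x y - ref x y))"
  proof (rule LD_sum[OF assms(1)], intro ballI)
    fix \<tau> assume t: "\<tau> \<in> T"
    show "LD E I D (\<lambda>x y. w \<tau> * (G \<tau> x y - ref x y))"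
    proof (cases "w \<tau> = 0")
      case True then show ?thesis using LD_zero by simp
    next
      case False then show ?thesis using LD_scale[OF assms(3)[OF t False]] by simp
    qed
  qed
  moreover have "(\<lambda>x y. \<Sum>\<tau>\<in>T. w \<tau> * (G \<tau> x y - ref x y)) = (\<lambda>x y. \<Sum>\<tau>\<in>T. w \<tau> * G \<tau> x y)"
  proof (intro ext)
    fix x y
    have "(\<Sum>\<tau>\<in>T. w \<tau> * (G \<tau> x y - ref x y)) = (\<Sum>\<tau>\<in>T. w \<tau> * G \<tau> x y) - (\<Sum>\<tau>\<in>T. w \<tau>) * ref x y"
      by (simp add: right_diff_distrib sum_subtractf sum_distrib_right)
    then show "(\<Sum>\<tau>\<in>T. w \<tau> * (G \<tau> x y - ref x y)) = (\<Sum>\<tau>\<in>T. w \<tau> * G \<tau> x y)" using assms(2) by simp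
  qed
  ultimately show ?thesis by simp
qed

lemma sum3: "(\<Sum>\<tau>\<in>UNIV. f \<tau>) = (\<Sum>J\<in>UNIV. \<Sum>K\<in>UNIV. \<Sum>l\<in>UNIV. f (J, K, l))"
  for f :: "'a::finite set \<times> 'a set \<times> 'a \<Rightarrow> 'b::comm_monoid_add"
proof -
  have "(\<Sum>\<tau>\<in>UNIV \<times> (UNIV \<times> UNIV). f \<tau>) = (\<Sum>J\<in>UNIV. \<Sum>K\<in>UNIV. \<Sum>l\<in>UNIV. f (J, K, l))"
    by (simp only: sum.cartesian_product')
  then show ?thesis by simp
qed

context qsetup
begin

lemma app_Pop_q: "app (Pop J K) (qstate I) = (\<lambda>_. 0)"
  unfolding Pop_def app_diff app_sum by (simp add: app_nstr_q app_Gop_q)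

definition GopT :: "'v set \<times> 'v set \<times> 'v \<Rightarrow> 'v qop" where
  "GopT \<tau> = Gop (fst \<tau>) (fst (snd \<tau>)) (snd (snd \<tau>))"

definition tgT :: "'v set \<times> 'v set \<times> 'v \<Rightarrow> 'v set" where
  "tgT \<tau> = tg (fst \<tau>) (fst (snd \<tau>)) (snd (snd \<tau>))"

lemma main_LD:
  fixes Op :: "'v qop"
  assumes conn: "graph_connected E" and Dle: "2 * r + 4 * d + 2 \<le> D"
    and Op: "Op = (\<lambda>x y. \<Sum>J\<in>UNIV. \<Sum>K\<in>UNIV. e J K * nstr J K x y)"
    and loc_e: "\<And>J K. e J K \<noteq> 0 \<Longrightarrow> \<forall>a\<in>J \<union> K. \<forall>b\<in>J \<union> K. near E r a b"
    and vac0: "app Op vac = (\<lambda>_. 0)" and q0: "app Op (qstate I) = (\<lambda>_. 0)"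
  shows "LD E I D Op"
proof -
  have e0: "e J {} = 0" for J
  proof -
    have "Op J {} = (\<Sum>J'\<in>UNIV. \<Sum>K\<in>UNIV. e J' K * (if K = {} \<and> J = J' then 1 else 0))"
      unfolding Op nstr_def by (intro sum.cong refl) auto
    also have "\<dots> = (\<Sum>J'\<in>UNIV. if J = J' then e J' {} else 0)"
      by (intro sum.cong refl) (simp add: if_distrib cong: if_cong)
    also have "\<dots> = e J {}" by simp
    finally have "Op J {} = e J {}" .
    moreover have "Op J {} = 0" using vac0 app_vac[of Op J] by (metis)
    ultimately show ?thesis by simp
  qed
  have locE: "loc r J K" if "e J K \<noteq> 0" for J K
    using that e0 loc_e unfolding loc_def by blast
  define P1 where "P1 = (\<lambda>x y. \<Sum>J\<in>UNIV. \<Sum>K\<in>UNIV. e J K * Pop J K x y)"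
  define w where "w \<tau> = (if snd (snd \<tau>) \<in> Lv (fst \<tau>) (fst (snd \<tau>)) then e (fst \<tau>) (fst (snd \<tau>)) else 0)" for \<tau>
  define Rem where "Rem = (\<lambda>x y. \<Sum>\<tau>\<in>UNIV. w \<tau> * GopT \<tau> x y)"
  have split: "Op = (\<lambda>x y. P1 x y + Rem x y)"
  proof (intro ext)
    fix x y
    have "Rem x y = (\<Sum>J\<in>UNIV. \<Sum>K\<in>UNIV. \<Sum>l\<in>UNIV. w (J, K, l) * GopT (J, K, l) x y)"
      unfolding Rem_def by (rule sum3)
    also have "\<dots> = (\<Sum>J\<in>UNIV. \<Sum>K\<in>UNIV. e J K * (\<Sum>l\<in>Lv J K. Gop J K l x y))"
    proof (intro sum.cong refl)
      fix J K
      have "(\<Sum>l\<in>UNIV. w (J, K, l) * GopT (J, K, l) x y) = (\<Sum>l\<in>UNIV. if l \<in> Lv J K then e J K * Gop J K l x y else 0)"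
        by (intro sum.cong refl) (simp add: w_def GopT_def)
      also have "\<dots> = e J K * (\<Sum>l\<in>Lv J K. Gop J K l x y)"
        by (simp add: sum.inter_filter[symmetric] sum_distrib_left)
      finally show "(\<Sum>l\<in>UNIV. w (J, K, l) * GopT (J, K, l) x y) = e J K * (\<Sum>l\<in>Lv J K. Gop J K l x y)" .
    qed
    finally have R: "Rem x y = (\<Sum>J\<in>UNIV. \<Sum>K\<in>UNIV. e J K * (\<Sum>l\<in>Lv J K. Gop J K l x y))" .
    show "Op x y = P1 x y + Rem x y"
      unfolding R P1_def Op Pop_def
      by (simp add: sum.distrib[symmetric] algebra_simps)
  qed
  have LD1: "LD E I D P1"
    unfolding P1_def
  proof (rule LD_sum, simp, intro ballI)
    fix J assume "J \<in> (UNIV :: 'v set set)"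
    show "LD E I D (\<lambda>x y. \<Sum>K\<in>UNIV. e J K * Pop J K x y)"
    proof (rule LD_sum, simp, intro ballI)
      fix K assume "K \<in> (UNIV :: 'v set set)"
      show "LD E I D (\<lambda>x y. e J K * Pop J K x y)"
      proof (cases "e J K = 0")
        case True then show ?thesis using LD_zero by simp
      next
        case False
        have "LD E I D (Pop J K)" by (rule Pop_LD[OF locE[OF False]]) (use Dle in simp)
        then show ?thesis by (rule LD_scale)
      qed
    qed
  qed
  have appP1: "app P1 (qstate I) = (\<lambda>_. 0)"
    unfolding P1_def app_sum app_scale by (simp add: app_Pop_q)
  have appRem: "app Rem (qstate I) x = (\<Sum>\<tau>\<in>{\<tau>. tgT \<tau> = x}. w \<tau>)" for x
  proof -
    have "app Rem (qstate I) x = (\<Sum>\<tau>\<in>UNIV. w \<tau> * app (GopT \<tau>) (qstate I) x)"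
      unfolding Rem_def app_sum app_scale by simp
    also have "\<dots> = (\<Sum>\<tau>\<in>UNIV. if tgT \<tau> = x then w \<tau> else 0)"
    proof (intro sum.cong refl)
      fix \<tau> :: "'v set \<times> 'v set \<times> 'v"
      show "w \<tau> * app (GopT \<tau>) (qstate I) x = (if tgT \<tau> = x then w \<tau> else 0)"
      proof (cases "snd (snd \<tau>) \<in> Lv (fst \<tau>) (fst (snd \<tau>))")
        case True
        then show ?thesis unfolding GopT_def tgT_def by (auto simp: app_Gop_q)
      next
        case False then show ?thesis unfolding w_def by simp
      qed
    qed
    also have "\<dots> = (\<Sum>\<tau>\<in>{\<tau>. tgT \<tau> = x}. w \<tau>)"
      by (simp add: sum.inter_filter[symmetric])
    finally show ?thesis .
  qed
  have sumzero: "(\<Sum>\<tau>\<in>{\<tau>. tgT \<tau> = t}. w \<tau>) = 0" for t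
  proof -
    have "app Op (qstate I) = (\<lambda>x. app P1 (qstate I) x + app Rem (qstate I) x)"
      using split app_add by metis
    then have "app Rem (qstate I) t = 0" using q0 appP1 by (metis add_0)
    then show ?thesis using appRem by simp
  qed
  have Rem_group: "Rem = (\<lambda>x y. \<Sum>t\<in>UNIV. \<Sum>\<tau>\<in>{\<tau>. tgT \<tau> = t}. w \<tau> * GopT \<tau> x y)"
  proof (intro ext)
    fix x y
    show "Rem x y = (\<Sum>t\<in>UNIV. \<Sum>\<tau>\<in>{\<tau>. tgT \<tau> = t}. w \<tau> * GopT \<tau> x y)"
      unfolding Rem_def using sum.group[of UNIV UNIV tgT "\<lambda>\<tau>. w \<tau> * GopT \<tau> x y"] by simp
  qed
  have wvalid: "e (fst \<tau>) (fst (snd \<tau>)) \<noteq> 0 \<and> snd (snd \<tau>) \<in> Lv (fst \<tau>) (fst (snd \<tau>))" if "w \<tau> \<noteq> 0" for \<tau>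
    using that unfolding w_def by (auto split: if_splits)
  have LDt: "LD E I D (\<lambda>x y. \<Sum>\<tau>\<in>{\<tau>. tgT \<tau> = t}. w \<tau> * GopT \<tau> x y)" for t
  proof (cases "t = {}")
    case True
    obtain l0 :: 'v where True by simp
    show ?thesis
    proof (rule LD_ref[where ref = "Aop l0"])
      show "(\<Sum>\<tau>\<in>{\<tau>. tgT \<tau> = t}. w \<tau>) = 0" by (rule sumzero)
    next
      fix \<tau> assume tt: "\<tau> \<in> {\<tau>. tgT \<tau> = t}" and wn: "w \<tau> \<noteq> 0"
      obtain J K l where tau: "\<tau> = (J, K, l)" by (cases \<tau>) auto
      have v: "e J K \<noteq> 0" "l \<in> Lv J K" using wvalid[OF wn] tau by auto
      have tg0: "(I l - K) \<union> J = {}" using tt True tau unfolding tgT_def tg_def by simp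
      have KI: "K \<subseteq> I l" using v(2) unfolding Lv_def by blast
      have JK: "J = {}" "K = I l" using tg0 KI by blast+
      have "GopT \<tau> = Aop l" unfolding tau GopT_def Gop_def Aop_def tg_def JK by simp
      then show "LD E I D (\<lambda>x y. GopT \<tau> x y - Aop l0 x y)"
        using Aop_chain_LD[OF conn, of D l l0] Dle by simp
    qed simp
  next
    case False
    define \<tau>0 where "\<tau>0 = (SOME \<tau>. \<tau> \<in> {\<tau>. tgT \<tau> = t} \<and> w \<tau> \<noteq> 0)"
    show ?thesis
    proof (rule LD_ref[where ref = "GopT \<tau>0"])
      show "(\<Sum>\<tau>\<in>{\<tau>. tgT \<tau> = t}. w \<tau>) = 0" by (rule sumzero)
    next
      fix \<tau> assume tt: "\<tau> \<in> {\<tau>. tgT \<tau> = t}" and wn: "w \<tau> \<noteq> 0"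
      have t0: "\<tau>0 \<in> {\<tau>. tgT \<tau> = t} \<and> w \<tau>0 \<noteq> 0"
        unfolding \<tau>0_def by (rule someI[of _ \<tau>]) (use tt wn in simp)
      obtain J K l where tau: "\<tau> = (J, K, l)" by (cases \<tau>) auto
      obtain J0 K0 l0 where tau0: "\<tau>0 = (J0, K0, l0)" by (cases \<tau>0) auto
      have v: "e J K \<noteq> 0" "l \<in> Lv J K" using wvalid[OF wn] tau by auto
      have v0: "e J0 K0 \<noteq> 0" "l0 \<in> Lv J0 K0" using wvalid t0 tau0 by auto
      have "LD E I D (\<lambda>x y. Gop J K l x y - Gop J0 K0 l0 x y)"
      proof (rule Gop_diff_LD[OF locE[OF v(1)] v(2) locE[OF v0(1)] v0(2)])
        show "tg J K l = t" using tt tau unfolding tgT_def by simp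
        show "tg J0 K0 l0 = t" using t0 tau0 unfolding tgT_def by simp
        show "t \<noteq> {}" by (rule False)
        show "2 * r + 4 * d + 1 \<le> D" using Dle by simp
      qed
      then show "LD E I D (\<lambda>x y. GopT \<tau> x y - GopT \<tau>0 x y)"
        unfolding tau tau0 GopT_def by simp
    qed simp
  qed
  have "LD E I D Rem"
    unfolding Rem_group by (rule LD_sum) (use LDt in auto)
  then show ?thesis unfolding split using LD_add[OF LD1] by blast
qed

end



context qsetup
begin

definition Bf :: "'v \<Rightarrow> 'v set" where
  "Bf i = {v. near E (2 * d) v i}"

definition fsw :: "'v \<Rightarrow> 'v set \<Rightarrow> 'v set" where
  "fsw i s = (if s = {i} then I i else if s = I i then {i} else s)"

definition tau :: "'v set \<Rightarrow> 'v set \<Rightarrow> 'v set" where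
  "tau L y = (y - (\<Union>i\<in>L. Bf i)) \<union> (\<Union>i\<in>L. fsw i (y \<inter> Bf i))"

definition layer :: "'v set \<Rightarrow> bool" where
  "layer L \<longleftrightarrow> (\<forall>i\<in>L. \<forall>j\<in>L. i \<noteq> j \<longrightarrow> \<not> near E (4 * d) i j)"

lemma I_sub_B: "I i \<subseteq> Bf i"
  unfolding Bf_def using nearI near_mono by fastforce

lemma i_in_B: "i \<in> Bf i"
  unfolding Bf_def by (simp add: near_refl)

lemma IB: "i \<in> I j \<Longrightarrow> I j \<subseteq> Bf i"
proof
  fix v assume ij: "i \<in> I j" and v: "v \<in> I j"
  have "near E d v j" using v nearI by blast
  moreover have "near E d j i" using ij nearI near_sym[OF graph] by blast
  ultimately have "near E (d + d) v i" by (rule near_trans)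
  then show "v \<in> Bf i" unfolding Bf_def by (simp add: mult_2)
qed

lemma I_not_single: "I i \<noteq> {v}"
  using card_I[of i] c_gt by auto

lemma fsw_sub: "s \<subseteq> Bf i \<Longrightarrow> fsw i s \<subseteq> Bf i"
  unfolding fsw_def using I_sub_B i_in_B by auto

lemma fsw_inv: "fsw i (fsw i s) = s"
  unfolding fsw_def using I_not_single[of i i] by auto

lemma fsw_empty: "fsw i {} = {}"
  unfolding fsw_def using I_ne[of i] by auto

lemma layer_disj:
  assumes "layer L" "i \<in> L" "j \<in> L" "i \<noteq> j"
  shows "Bf i \<inter> Bf j = {}"
proof (rule ccontr)
  assume "Bf i \<inter> Bf j \<noteq> {}"
  then obtain v where "near E (2 * d) v i" "near E (2 * d) v j" unfolding Bf_def by blast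
  then have "near E (2 * d) i v" "near E (2 * d) v j" using near_sym[OF graph] by blast+
  then have "near E (2 * d + 2 * d) i j" by (rule near_trans)
  then have "near E (4 * d) i j" by simp
  then show False using assms unfolding layer_def by blast
qed

lemma tau_restrict:
  assumes "layer L" "i \<in> L"
  shows "tau L y \<inter> Bf i = fsw i (y \<inter> Bf i)"
proof -
  have a: "(y - (\<Union>i\<in>L. Bf i)) \<inter> Bf i = {}" using assms(2) by blast
  have b: "fsw j (y \<inter> Bf j) \<inter> Bf i = (if j = i then fsw i (y \<inter> Bf i) else {})" if "j \<in> L" for j
  proof (cases "j = i")
    case True
    then show ?thesis using fsw_sub[of "y \<inter> Bf i" i] by auto
  next
    case False
    have "fsw j (y \<inter> Bf j) \<subseteq> Bf j" by (rule fsw_sub) blast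
    then show ?thesis using layer_disj[OF assms(1) that assms(2) False] False by auto
  qed
  have "tau L y \<inter> Bf i = ((y - (\<Union>i\<in>L. Bf i)) \<inter> Bf i) \<union> (\<Union>j\<in>L. fsw j (y \<inter> Bf j) \<inter> Bf i)"
    unfolding tau_def by blast
  also have "\<dots> = (\<Union>j\<in>L. if j = i then fsw i (y \<inter> Bf i) else {})"
    using a b by simp
  also have "\<dots> = fsw i (y \<inter> Bf i)" using assms(2) by (auto split: if_splits)
  finally show ?thesis .
qed

lemma tau_outside: "tau L y - (\<Union>i\<in>L. Bf i) = y - (\<Union>i\<in>L. Bf i)"
proof -
  have "fsw i (y \<inter> Bf i) \<subseteq> Bf i" for i by (rule fsw_sub) blast
  then show ?thesis unfolding tau_def by blast
qed

lemma tau_decomp: "y = (y - (\<Union>i\<in>L. Bf i)) \<union> (\<Union>i\<in>L. y \<inter> Bf i)"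
  by blast

lemma tau_invol:
  assumes "layer L"
  shows "tau L (tau L y) = y"
proof -
  have "tau L (tau L y) = (tau L y - (\<Union>i\<in>L. Bf i)) \<union> (\<Union>i\<in>L. fsw i (tau L y \<inter> Bf i))"
    unfolding tau_def[of L "tau L y"] by simp
  also have "\<dots> = (y - (\<Union>i\<in>L. Bf i)) \<union> (\<Union>i\<in>L. fsw i (fsw i (y \<inter> Bf i)))"
    using tau_restrict[OF assms] tau_outside by simp
  also have "\<dots> = y" by (simp add: fsw_inv) blast
  finally show ?thesis .
qed

lemma tau_fix:
  assumes "\<forall>i\<in>L. fsw i (y \<inter> Bf i) = y \<inter> Bf i"
  shows "tau L y = y"
  unfolding tau_def using assms by auto

lemma tau_empty: "tau L {} = {}"
  unfolding tau_def by (simp add: fsw_empty)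

definition compat :: "'v set \<Rightarrow> 'v set \<Rightarrow> bool" where
  "compat L W \<longleftrightarrow> (\<forall>i\<in>L. Bf i \<subseteq> W \<or> Bf i \<inter> W = {})"

lemma tau_Int:
  assumes "compat L W"
  shows "tau L (y \<inter> W) = tau L y \<inter> W"
proof -
  have e: "fsw i (y \<inter> W \<inter> Bf i) = fsw i (y \<inter> Bf i) \<inter> W" if "i \<in> L" for i
  proof (cases "Bf i \<subseteq> W")
    case True
    have "y \<inter> W \<inter> Bf i = y \<inter> Bf i" using True by blast
    moreover have "fsw i (y \<inter> Bf i) \<subseteq> W" using fsw_sub[of "y \<inter> Bf i" i] True by blast
    ultimately show ?thesis by auto
  next
    case False
    then have d: "Bf i \<inter> W = {}" using assms that unfolding compat_def by blast
    then have "y \<inter> W \<inter> Bf i = {}" by blast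
    moreover have "fsw i (y \<inter> Bf i) \<inter> W = {}" using fsw_sub[of "y \<inter> Bf i" i] d by blast
    ultimately show ?thesis by (simp add: fsw_empty)
  qed
  have "tau L (y \<inter> W) = (y \<inter> W - (\<Union>i\<in>L. Bf i)) \<union> (\<Union>i\<in>L. fsw i (y \<inter> Bf i) \<inter> W)"
    unfolding tau_def using e by simp
  also have "\<dots> = tau L y \<inter> W" unfolding tau_def by blast
  finally show ?thesis .
qed

lemma tau_Diff:
  assumes "compat L W"
  shows "tau L (y - W) = tau L y - W"
proof -
  have e: "fsw i ((y - W) \<inter> Bf i) = fsw i (y \<inter> Bf i) - W" if "i \<in> L" for i
  proof (cases "Bf i \<subseteq> W")
    case True
    have "(y - W) \<inter> Bf i = {}" using True by blast
    moreover have "fsw i (y \<inter> Bf i) - W = {}" using fsw_sub[of "y \<inter> Bf i" i] True by blast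
    ultimately show ?thesis by (simp add: fsw_empty)
  next
    case False
    then have d: "Bf i \<inter> W = {}" using assms that unfolding compat_def by blast
    then have "(y - W) \<inter> Bf i = y \<inter> Bf i" by blast
    moreover have "fsw i (y \<inter> Bf i) - W = fsw i (y \<inter> Bf i)" using fsw_sub[of "y \<inter> Bf i" i] d by blast
    ultimately show ?thesis by simp
  qed
  have "tau L (y - W) = (y - W - (\<Union>i\<in>L. Bf i)) \<union> (\<Union>i\<in>L. fsw i (y \<inter> Bf i) - W)"
    unfolding tau_def using e by simp
  also have "\<dots> = tau L y - W" unfolding tau_def by blast
  finally show ?thesis .
qed

end



context qsetup
begin

lemma conj_supported:
  assumes lay: "layer L" and sup: "supported_in Op Z" and ZW: "Z \<subseteq> W" and cp: "compat L W"
  shows "supported_in (\<lambda>x y. Op (tau L x) (tau L y)) W"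
  unfolding supported_iff
proof (intro allI)
  fix x y
  let ?T = "tau L"
  have hO: "\<And>a b. Op a b = (if a - Z = b - Z then Op (a \<inter> Z) (b \<inter> Z) else 0)"
    using sup supported_iff by metis
  have inj: "\<And>a b. ?T a = ?T b \<Longrightarrow> a = b" using tau_invol[OF lay] by metis
  show "Op (?T x) (?T y) = (if x - W = y - W then Op (?T (x \<inter> W)) (?T (y \<inter> W)) else 0)"
  proof (cases "x - W = y - W")
    case False
    then have "?T (x - W) \<noteq> ?T (y - W)" using inj by blast
    then have "?T x - W \<noteq> ?T y - W" using tau_Diff[OF cp] by simp
    then have "?T x - Z \<noteq> ?T y - Z" using ZW by blast
    then show ?thesis using hO[of "?T x" "?T y"] False by simp
  next
    case True
    have dW: "?T x - W = ?T y - W" using True tau_Diff[OF cp] by metis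
    have iW: "?T (x \<inter> W) = ?T x \<inter> W" "?T (y \<inter> W) = ?T y \<inter> W" using tau_Int[OF cp] by auto
    have z1: "?T x \<inter> Z = ?T (x \<inter> W) \<inter> Z" "?T y \<inter> Z = ?T (y \<inter> W) \<inter> Z" using iW ZW by auto
    have z2: "(?T x - Z = ?T y - Z) \<longleftrightarrow> (?T (x \<inter> W) - Z = ?T (y \<inter> W) - Z)"
    proof -
      have "?T x - Z = (?T x \<inter> W - Z) \<union> (?T x - W)" using ZW by blast
      moreover have "?T y - Z = (?T y \<inter> W - Z) \<union> (?T y - W)" using ZW by blast
      ultimately show ?thesis using dW iW by blast
    qed
    have "Op (?T x) (?T y) = (if ?T x - Z = ?T y - Z then Op (?T x \<inter> Z) (?T y \<inter> Z) else 0)"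
      by (rule hO)
    also have "\<dots> = (if ?T (x \<inter> W) - Z = ?T (y \<inter> W) - Z then Op (?T (x \<inter> W) \<inter> Z) (?T (y \<inter> W) \<inter> Z) else 0)"
      using z1 z2 by simp
    also have "\<dots> = Op (?T (x \<inter> W)) (?T (y \<inter> W))" using hO by metis
    finally show ?thesis using True by simp
  qed
qed

definition pairnear :: "nat \<Rightarrow> 'v set \<Rightarrow> bool" where
  "pairnear n Z \<longleftrightarrow> (\<forall>a\<in>Z. \<forall>b\<in>Z. near E n a b)"

lemma grow:
  assumes lay: "layer L" and sup: "supported_in Op Z" and pn: "pairnear n Z"
  shows "\<exists>Z'. supported_in (\<lambda>x y. Op (tau L x) (tau L y)) Z' \<and> pairnear (n + 8 * d) Z'"
proof -
  define Z' where "Z' = Z \<union> (\<Union>i\<in>{i \<in> L. Bf i \<inter> Z \<noteq> {}}. Bf i)"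
  have cp: "compat L Z'" unfolding compat_def
  proof
    fix i assume iL: "i \<in> L"
    show "Bf i \<subseteq> Z' \<or> Bf i \<inter> Z' = {}"
    proof (cases "Bf i \<inter> Z = {}")
      case False then show ?thesis using iL unfolding Z'_def by blast
    next
      case True
      have "Bf i \<inter> Bf j = {}" if "j \<in> L" "Bf j \<inter> Z \<noteq> {}" for j
        using layer_disj[OF lay iL that(1)] True that(2) by blast
      then have "Bf i \<inter> Z' = {}" using True unfolding Z'_def by blast
      then show ?thesis by blast
    qed
  qed
  have s: "supported_in (\<lambda>x y. Op (tau L x) (tau L y)) Z'"
    by (rule conj_supported[OF lay sup _ cp]) (auto simp: Z'_def)
  have toZ: "\<exists>z\<in>Z. near E (4 * d) a z" if aZ: "a \<in> Z'" for a
  proof (cases "a \<in> Z")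
    case True then show ?thesis by (intro bexI[of _ a]) (simp_all add: near_refl)
  next
    case False
    then obtain i z where i: "a \<in> Bf i" "z \<in> Bf i" "z \<in> Z" using aZ unfolding Z'_def by blast
    have "near E (2 * d) a i" "near E (2 * d) i z" using i near_sym[OF graph] unfolding Bf_def by blast+
    then have "near E (2 * d + 2 * d) a z" by (rule near_trans)
    then show ?thesis using i(3) by auto
  qed
  have "pairnear (n + 8 * d) Z'" unfolding pairnear_def
  proof (intro ballI)
    fix a b assume "a \<in> Z'" "b \<in> Z'"
    then obtain za zb where z: "za \<in> Z" "zb \<in> Z" "near E (4 * d) a za" "near E (4 * d) b zb"
      using toZ by blast
    have "near E (4 * d) zb b" using z(4) near_sym[OF graph] by blast
    moreover have "near E n za zb" using pn z unfolding pairnear_def by blast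
    ultimately have "near E (4 * d + n + 4 * d) a b" by (intro near_trans[OF near_trans[OF z(3)]])
    then show "near E (n + 8 * d) a b" by (simp add: algebra_simps)
  qed
  then show ?thesis using s by blast
qed

end



lemma greedy_coloring:
  fixes C :: "'v::finite \<Rightarrow> 'v \<Rightarrow> bool"
  assumes sym: "\<And>a b. C a b \<Longrightarrow> C b a" and deg: "\<And>a. card {b. b \<noteq> a \<and> C a b} \<le> Dg"
  shows "\<exists>col. (\<forall>v. col v \<le> Dg) \<and> (\<forall>a b. a \<noteq> b \<and> C a b \<longrightarrow> col a \<noteq> col b)"
proof -
  have "finite A \<Longrightarrow> \<exists>col. (\<forall>v\<in>A. col v \<le> Dg) \<and> (\<forall>a\<in>A. \<forall>b\<in>A. a \<noteq> b \<and> C a b \<longrightarrow> col a \<noteq> col b)" for A :: "'v set"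
  proof (induction A rule: finite_induct)
    case empty then show ?case by simp
  next
    case (insert x A)
    obtain col where col: "\<forall>v\<in>A. col v \<le> Dg" "\<forall>a\<in>A. \<forall>b\<in>A. a \<noteq> b \<and> C a b \<longrightarrow> col a \<noteq> col b"
      using insert.IH by blast
    define used where "used = col ` {b \<in> A. b \<noteq> x \<and> C x b}"
    have "card used \<le> card {b \<in> A. b \<noteq> x \<and> C x b}" unfolding used_def by (rule card_image_le) simp
    also have "\<dots> \<le> card {b. b \<noteq> x \<and> C x b}" by (rule card_mono) auto
    also have "\<dots> \<le> Dg" by (rule deg)
    finally have cu: "card used \<le> Dg" .
    have "\<exists>k\<in>{0..Dg}. k \<notin> used"
    proof (rule ccontr)
      assume "\<not> (\<exists>k\<in>{0..Dg}. k \<notin> used)"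
      then have "{0..Dg} \<subseteq> used" by blast
      moreover have "finite used" unfolding used_def by simp
      ultimately have "card {0..Dg} \<le> card used" by (rule card_mono[rotated])
      then show False using cu by simp
    qed
    then obtain k where k: "k \<le> Dg" "k \<notin> used" by auto
    show ?case
    proof (rule exI[of _ "col(x := k)"], intro conjI ballI impI)
      fix v assume "v \<in> insert x A" then show "(col(x := k)) v \<le> Dg" using col k by auto
    next
      fix a b assume ab: "a \<in> insert x A" "b \<in> insert x A" "a \<noteq> b \<and> C a b"
      show "(col(x := k)) a \<noteq> (col(x := k)) b"
      proof (cases "a = x")
        case True
        then have "b \<in> A" "b \<noteq> x" "C x b" using ab by auto
        then have "col b \<in> used" unfolding used_def by blast
        then show ?thesis using True k(2) \<open>b \<noteq> x\<close> by auto
      next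
        case False
        show ?thesis
        proof (cases "b = x")
          case True
          then have "a \<in> A" "a \<noteq> x" "C x a" using ab False sym by auto
          then have "col a \<in> used" unfolding used_def by blast
          then show ?thesis using True k(2) False by auto
        next
          case False2: False
          then show ?thesis using False ab col(2) by auto
        qed
      qed
    qed
  qed
  from this[of UNIV] show ?thesis by auto
qed

definition pm :: "('v set \<Rightarrow> 'v set) \<Rightarrow> 'v qop" where
  "pm \<sigma> = (\<lambda>x y. if x = \<sigma> y then 1 else 0)"

lemma sum_perm:
  fixes \<sigma> :: "'v::finite set \<Rightarrow> 'v set" and g :: "'v set \<Rightarrow> complex"
  assumes "\<And>y. \<sigma> (\<rho> y) = y" "\<And>y. \<rho> (\<sigma> y) = y"
  shows "(\<Sum>w\<in>UNIV. (if x = \<sigma> w then 1 else 0) * g w) = g (\<rho> x)"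
proof -
  have "(\<Sum>w\<in>UNIV. (if x = \<sigma> w then 1 else 0) * g w) = (\<Sum>w\<in>UNIV. if w = \<rho> x then g w else 0)"
  proof (intro sum.cong refl)
    fix w
    have iff: "(x = \<sigma> w) = (w = \<rho> x)" using assms by metis
    show "(if x = \<sigma> w then 1 else 0) * g w = (if w = \<rho> x then g w else 0)"
      by (simp only: iff) simp
  qed
  then show ?thesis by simp
qed

lemma mmul_pm:
  fixes \<sigma> :: "'v::finite set \<Rightarrow> 'v set"
  shows "mmul (pm \<sigma>) (pm \<rho>) = pm (\<sigma> \<circ> \<rho>)"
proof (intro ext)
  fix x y
  have "mmul (pm \<sigma>) (pm \<rho>) x y = (\<Sum>z\<in>UNIV. if z = \<rho> y then (if x = \<sigma> z then 1 else 0) else 0)"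
    unfolding mmul_def pm_def by (intro sum.cong refl) auto
  then show "mmul (pm \<sigma>) (pm \<rho>) x y = pm (\<sigma> \<circ> \<rho>) x y" unfolding pm_def by simp
qed

lemma pm_id: "pm (\<lambda>y. y) = idop"
  unfolding pm_def idop_def by simp

lemma conj_pm:
  fixes \<sigma> :: "'v::finite set \<Rightarrow> 'v set"
  assumes "\<And>y. \<sigma> (\<rho> y) = y" "\<And>y. \<rho> (\<sigma> y) = y"
  shows "mmul (mmul (pm \<sigma>) Op) (pm \<rho>) = (\<lambda>x y. Op (\<rho> x) (\<rho> y))"
proof (intro ext)
  fix x y
  have a: "mmul (pm \<sigma>) Op x z = Op (\<rho> x) z" for z
    unfolding mmul_def pm_def by (rule sum_perm[OF assms])
  have "mmul (mmul (pm \<sigma>) Op) (pm \<rho>) x y = (\<Sum>z\<in>UNIV. if z = \<rho> y then Op (\<rho> x) z else 0)"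
    unfolding mmul_def[of "mmul (pm \<sigma>) Op"] a unfolding pm_def by (intro sum.cong refl) auto
  then show "mmul (mmul (pm \<sigma>) Op) (pm \<rho>) x y = Op (\<rho> x) (\<rho> y)" by simp
qed

lemma app_pm:
  fixes \<sigma> :: "'v::finite set \<Rightarrow> 'v set"
  assumes "\<And>y. \<sigma> (\<rho> y) = y" "\<And>y. \<rho> (\<sigma> y) = y"
  shows "app (pm \<sigma>) \<psi> = (\<lambda>x. \<psi> (\<rho> x))"
  unfolding app_def pm_def by (rule ext, rule sum_perm[OF assms])



context qsetup
begin

lemma deg_le: "card {u. E v u} \<le> max_degree E"
  unfolding max_degree_def by (rule Max_ge) auto

lemma ball_card: "card {b. b \<noteq> a \<and> near E m a b} \<le> max_degree E ^ m"
proof (induction m arbitrary: a)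
  case 0
  have e: "{b. b \<noteq> a \<and> near E 0 a b} = {}" by (auto simp: near_0)
  show ?case by (simp only: e card.empty zero_le)
next
  case (Suc m)
  show ?case
  proof (cases "m = 0")
    case True
    have "{b. b \<noteq> a \<and> near E (Suc m) a b} \<subseteq> {u. E a u}"
    proof
      fix b assume "b \<in> {b. b \<noteq> a \<and> near E (Suc m) a b}"
      then obtain k where k: "k \<le> 1" "(E ^^ k) a b" "b \<noteq> a" using True unfolding near_def by auto
      then have k1: "k = 1" by (cases k) auto
      show "b \<in> {u. E a u}" using k(2) k1 by (simp only: relpowp_1 mem_Collect_eq)
    qed
    then have "card {b. b \<noteq> a \<and> near E (Suc m) a b} \<le> card {u. E a u}" by (rule card_mono[rotated]) simp
    also have "\<dots> \<le> max_degree E" by (rule deg_le)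
    finally show ?thesis using True by simp
  next
    case False
    define S where "S u = {b. near E m u b}" for u
    have sub: "{b. b \<noteq> a \<and> near E (Suc m) a b} \<subseteq> (\<Union>u\<in>{u. E a u}. S u - {a})"
    proof
      fix b assume "b \<in> {b. b \<noteq> a \<and> near E (Suc m) a b}"
      then obtain k where k: "k \<le> Suc m" "(E ^^ k) a b" "b \<noteq> a" unfolding near_def by auto
      then obtain k' where k': "k = Suc k'" by (cases k) auto
      then obtain u where u: "E a u" "(E ^^ k') u b" using k(2) relpowp_Suc_D2 by metis
      have "near E m u b" unfolding near_def using u(2) k k' by auto
      then show "b \<in> (\<Union>u\<in>{u. E a u}. S u - {a})" using u(1) k(3) unfolding S_def by blast
    qed
    have each: "card (S u - {a}) \<le> max_degree E ^ m" if "E a u" for u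
    proof -
      have "near E 1 u a" using near_edge[of E a u, OF that] near_sym[OF graph] by blast
      then have aS: "a \<in> S u" unfolding S_def using False near_mono by fastforce
      have uS: "u \<in> S u" unfolding S_def by (simp add: near_refl)
      have "card (S u - {a}) = card (S u) - 1" using aS by (simp add: card_Diff_singleton)
      also have "\<dots> = card (S u - {u})" using uS by (simp add: card_Diff_singleton)
      also have "S u - {u} = {b. b \<noteq> u \<and> near E m u b}" unfolding S_def by auto
      also have "card \<dots> \<le> max_degree E ^ m" by (rule Suc.IH)
      finally show ?thesis .
    qed
    have "card {b. b \<noteq> a \<and> near E (Suc m) a b} \<le> card (\<Union>u\<in>{u. E a u}. S u - {a})"
      by (rule card_mono[OF _ sub]) simp
    also have "\<dots> \<le> (\<Sum>u\<in>{u. E a u}. card (S u - {a}))" by (rule card_UN_le) simp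
    also have "\<dots> \<le> (\<Sum>u\<in>{u. E a u}. max_degree E ^ m)" by (rule sum_mono) (use each in simp)
    also have "\<dots> = card {u. E a u} * max_degree E ^ m" by simp
    also have "\<dots> \<le> max_degree E * max_degree E ^ m" by (rule mult_right_mono[OF deg_le]) simp
    finally show ?thesis by simp
  qed
qed

fun sig :: "(nat \<Rightarrow> 'v set) \<Rightarrow> nat \<Rightarrow> 'v set \<Rightarrow> 'v set" where
  "sig Lc 0 y = y"
| "sig Lc (Suc k) y = tau (Lc k) (sig Lc k y)"

fun sinv :: "(nat \<Rightarrow> 'v set) \<Rightarrow> nat \<Rightarrow> 'v set \<Rightarrow> 'v set" where
  "sinv Lc 0 y = y"
| "sinv Lc (Suc k) y = sinv Lc k (tau (Lc k) y)"

lemma sig_sinv: "(\<And>k. layer (Lc k)) \<Longrightarrow> sig Lc k (sinv Lc k y) = y"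
  by (induction k arbitrary: y) (simp_all add: tau_invol)

lemma sinv_sig: "(\<And>k. layer (Lc k)) \<Longrightarrow> sinv Lc k (sig Lc k y) = y"
  by (induction k arbitrary: y) (simp_all add: tau_invol)

lemma grow_sinv:
  assumes lay: "\<And>k. layer (Lc k)"
  shows "supported_in Op Z \<Longrightarrow> pairnear n Z \<Longrightarrow>
    \<exists>Z'. supported_in (\<lambda>x y. Op (sinv Lc k x) (sinv Lc k y)) Z' \<and> pairnear (n + 8 * d * k) Z'"
proof (induction k)
  case 0 then show ?case by auto
next
  case (Suc k)
  then obtain Z1 where Z1: "supported_in (\<lambda>x y. Op (sinv Lc k x) (sinv Lc k y)) Z1" "pairnear (n + 8 * d * k) Z1"
    by blast
  from grow[OF lay Z1] obtain Z2 where
    "supported_in (\<lambda>x y. Op (sinv Lc k (tau (Lc k) x)) (sinv Lc k (tau (Lc k) y))) Z2"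
    "pairnear (n + 8 * d * k + 8 * d) Z2" by blast
  then show ?case by (intro exI[of _ Z2]) (simp add: algebra_simps)
qed

lemma grow_sig:
  assumes lay: "\<And>k. layer (Lc k)"
  shows "supported_in Op Z \<Longrightarrow> pairnear n Z \<Longrightarrow>
    \<exists>Z'. supported_in (\<lambda>x y. Op (sig Lc k x) (sig Lc k y)) Z' \<and> pairnear (n + 8 * d * k) Z'"
proof (induction k arbitrary: Op Z n)
  case 0 then show ?case by auto
next
  case (Suc k)
  from grow[OF lay Suc.prems] obtain Z1 where Z1:
    "supported_in (\<lambda>x y. Op (tau (Lc k) x) (tau (Lc k) y)) Z1" "pairnear (n + 8 * d) Z1" by blast
  from Suc.IH[OF Z1] obtain Z2 where
    "supported_in (\<lambda>x y. Op (tau (Lc k) (sig Lc k x)) (tau (Lc k) (sig Lc k y))) Z2"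
    "pairnear (n + 8 * d + 8 * d * k) Z2" by blast
  then show ?case by (intro exI[of _ Z2]) (simp add: algebra_simps)
qed

lemma range_conj:
  fixes \<rho> :: "'v set \<Rightarrow> 'v set"
  assumes rl: "range_le E Op R" and R: "0 < R"
    and G: "\<And>Op Z n. supported_in Op Z \<Longrightarrow> pairnear n Z \<Longrightarrow>
       \<exists>Z'. supported_in (\<lambda>x y. Op (\<rho> x) (\<rho> y)) Z' \<and> pairnear (n + \<delta>) Z'"
  shows "range_le E (\<lambda>x y. Op (\<rho> x) (\<rho> y)) (R + \<delta>)"
proof -
  obtain cc where cc: "Op = (\<lambda>x y. \<Sum>J\<in>UNIV. \<Sum>K\<in>UNIV. cc J K * nstr J K x y)"
    "\<And>J K. cc J K \<noteq> 0 \<Longrightarrow> 0 < R \<and> (\<forall>a\<in>J \<union> K. \<forall>b\<in>J \<union> K. near E (R - 1) a b)"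
    using range_le_terms[OF rl] by blast
  define f where "f p = (\<lambda>x y. cc (fst p) (snd p) * nstr (fst p) (snd p) (\<rho> x) (\<rho> y))" for p
  have eq: "(\<lambda>x y. Op (\<rho> x) (\<rho> y)) = (\<lambda>x y. \<Sum>p\<in>UNIV. f p x y)"
  proof (intro ext)
    fix x y
    have "(\<Sum>p\<in>UNIV \<times> UNIV. f p x y) = (\<Sum>J\<in>UNIV. \<Sum>K\<in>UNIV. f (J, K) x y)"
      by (simp only: sum.cartesian_product')
    then show "Op (\<rho> x) (\<rho> y) = (\<Sum>p\<in>UNIV. f p x y)" unfolding cc(1) f_def by simp
  qed
  have ex: "\<forall>p\<in>UNIV. \<exists>Z. supported_in (f p) Z \<and> (\<forall>a\<in>Z. \<forall>b\<in>Z. near E (R - 1 + \<delta>) a b)"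
  proof
    fix p :: "'v set \<times> 'v set"
    obtain J K where p: "p = (J, K)" by (cases p)
    show "\<exists>Z. supported_in (f p) Z \<and> (\<forall>a\<in>Z. \<forall>b\<in>Z. near E (R - 1 + \<delta>) a b)"
    proof (cases "cc J K = 0")
      case True
      then have "f p = (\<lambda>x y. 0)" unfolding f_def p by simp
      then show ?thesis using supported_zero by (intro exI[of _ "{}"]) simp
    next
      case False
      have "pairnear (R - 1) (J \<union> K)" using cc(2)[OF False] unfolding pairnear_def by blast
      from G[OF nstr_supported this] obtain Z' where Z':
        "supported_in (\<lambda>x y. nstr J K (\<rho> x) (\<rho> y)) Z'" "pairnear (R - 1 + \<delta>) Z'" by blast
      have "supported_in (f p) Z'" unfolding f_def p using supported_scale[OF Z'(1)] by simp
      then show ?thesis using Z'(2) unfolding pairnear_def by blast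
    qed
  qed
  then have "\<exists>Zf. \<forall>p\<in>UNIV. supported_in (f p) (Zf p) \<and> (\<forall>a\<in>Zf p. \<forall>b\<in>Zf p. near E (R - 1 + \<delta>) a b)"
    by (rule bchoice)
  then obtain Zf where Zf: "\<forall>p\<in>UNIV. supported_in (f p) (Zf p) \<and> (\<forall>a\<in>Zf p. \<forall>b\<in>Zf p. near E (R - 1 + \<delta>) a b)"
    by (rule exE)
  have "range_le E (\<lambda>x y. \<Sum>p\<in>UNIV. f p x y) (R - 1 + \<delta> + 1)"
    by (rule range_from_supported[OF _ Zf]) simp
  then show ?thesis using eq R by simp
qed

lemma tau_single_other:
  assumes "j \<notin> L"
  shows "tau L {j} = {j}"
proof (rule tau_fix, intro ballI)
  fix i assume iL: "i \<in> L"
  then have ij: "i \<noteq> j" using assms by blast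
  show "fsw i ({j} \<inter> Bf i) = {j} \<inter> Bf i"
  proof (cases "j \<in> Bf i")
    case True
    have "{j} \<noteq> I i" using I_not_single[of i j] by simp
    then show ?thesis using True ij unfolding fsw_def by auto
  next
    case False then show ?thesis by (simp add: fsw_empty)
  qed
qed

lemma tau_single_own:
  assumes lay: "layer L" and jL: "j \<in> L"
  shows "tau L {j} = I j"
proof -
  have a: "{j} - (\<Union>i\<in>L. Bf i) = {}" using jL i_in_B by blast
  have b: "fsw i ({j} \<inter> Bf i) = (if i = j then I j else {})" if "i \<in> L" for i
  proof (cases "i = j")
    case True
    then show ?thesis using i_in_B[of j] unfolding fsw_def by simp
  next
    case False
    have "j \<notin> Bf i" using layer_disj[OF lay that jL False] i_in_B[of j] by blast
    then have "{j} \<inter> Bf i = {}" by blast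
    then show ?thesis using False by (simp add: fsw_empty)
  qed
  have "tau L {j} = (\<Union>i\<in>L. if i = j then I j else {})"
    unfolding tau_def a using b by simp
  also have "\<dots> = I j" using jL by (auto split: if_splits)
  finally show ?thesis .
qed

lemma tau_I_other:
  assumes "j \<notin> L"
  shows "tau L (I j) = I j"
proof (rule tau_fix, intro ballI)
  fix i assume iL: "i \<in> L"
  have n1: "I j \<inter> Bf i \<noteq> {i}"
  proof
    assume h: "I j \<inter> Bf i = {i}"
    then have "i \<in> I j" by blast
    then have "I j \<subseteq> Bf i" by (rule IB)
    then have "I j = {i}" using h by blast
    then show False using I_not_single by blast
  qed
  have n2: "I j \<inter> Bf i \<noteq> I i"
  proof
    assume "I j \<inter> Bf i = I i"
    then have "I i \<subseteq> I j" by blast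
    then have "i = j" by (rule I_sub_eq)
    then show False using iL assms by blast
  qed
  show "fsw i (I j \<inter> Bf i) = I j \<inter> Bf i" unfolding fsw_def using n1 n2 by simp
qed

lemma part1:
  fixes col :: "'v \<Rightarrow> nat"
  assumes colK: "\<And>v. col v < K" and colC: "\<And>a b. a \<noteq> b \<Longrightarrow> near E (4 * d) a b \<Longrightarrow> col a \<noteq> col b"
  shows "\<exists>M. loc_preserving E (8 * d * K) M \<and>
    app M Wstate = (\<lambda>x. complex_of_real (1 / sqrt (real (card (UNIV :: 'v set)))) *
        app (\<lambda>x y. \<Sum>i\<in>UNIV. nstr (I i) {} x y) vac x) \<and> app M vac = vac"
proof -
  define Lc where "Lc k = {i. col i = k}" for k
  have lay: "layer (Lc k)" for k
    unfolding layer_def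
  proof (intro ballI impI)
    fix i j assume "i \<in> Lc k" "j \<in> Lc k" "i \<noteq> j"
    then have "col i = col j" unfolding Lc_def by simp
    then show "\<not> near E (4 * d) i j" using colC[OF \<open>i \<noteq> j\<close>] by blast
  qed
  have ss: "\<And>y. sig Lc K (sinv Lc K y) = y" by (rule sig_sinv[OF lay])
  have si: "\<And>y. sinv Lc K (sig Lc K y) = y" by (rule sinv_sig[OF lay])
  have sig_empty: "sig Lc k {} = {}" for k by (induction k) (simp_all add: tau_empty)
  have sig_single: "sig Lc k {j} = (if col j < k then I j else {j})" for k j
  proof (induction k)
    case 0 then show ?case by simp
  next
    case (Suc k)
    consider "col j < k" | "col j = k" | "k < col j" by linarith
    then show ?case
    proof cases
      case 1
      then have "j \<notin> Lc k" unfolding Lc_def by simp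
      then show ?thesis using Suc 1 tau_I_other by simp
    next
      case 2
      then have "j \<in> Lc k" unfolding Lc_def by simp
      then show ?thesis using Suc 2 tau_single_own[OF lay] by simp
    next
      case 3
      then have "j \<notin> Lc k" unfolding Lc_def by simp
      then show ?thesis using Suc 3 tau_single_other by simp
    qed
  qed
  define M where "M = pm (sig Lc K)"
  have appM: "app M \<psi> = (\<lambda>x. \<psi> (sinv Lc K x))" for \<psi>
    unfolding M_def by (rule app_pm[of "sig Lc K" "sinv Lc K"]) (simp_all add: ss si)
  have lp: "loc_preserving E (8 * d * K) M"
    unfolding loc_preserving_def
  proof (intro exI[of _ "pm (sinv Lc K)"] conjI allI impI)
    have f1: "sig Lc K \<circ> sinv Lc K = (\<lambda>y. y)" using ss by (simp add: comp_def)
    have f2: "sinv Lc K \<circ> sig Lc K = (\<lambda>y. y)" using si by (simp add: comp_def)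
    show "inverse_ops M (pm (sinv Lc K))"
      unfolding inverse_ops_def M_def mmul_pm f1 f2 pm_id by simp
  next
    fix Op R assume R: "0 < R" "range_le E Op R"
    show "range_le E (mmul (mmul M Op) (pm (sinv Lc K))) (R + 8 * d * K)"
      unfolding M_def conj_pm[OF ss si]
      by (rule range_conj[OF R(2) R(1)]) (rule grow_sinv[OF lay])
    show "range_le E (mmul (mmul (pm (sinv Lc K)) Op) M) (R + 8 * d * K)"
      unfolding M_def conj_pm[OF si ss]
      by (rule range_conj[OF R(2) R(1)]) (rule grow_sig[OF lay])
  qed
  have sd: "app (sdag i) vac y = (if y = {i} then 1 else 0)" for i y
    unfolding app_vac sdag_def nstr_def by auto
  have qd: "app (\<lambda>x y. \<Sum>i\<in>UNIV. nstr (I i) {} x y) vac x = (\<Sum>i\<in>UNIV. if x = I i then 1 else 0)" for x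
    unfolding app_vac nstr_def by simp
  have W: "app M Wstate = (\<lambda>x. complex_of_real (1 / sqrt (real (card (UNIV :: 'v set)))) *
        app (\<lambda>x y. \<Sum>i\<in>UNIV. nstr (I i) {} x y) vac x)"
  proof (intro ext)
    fix x
    have "(\<Sum>i\<in>UNIV. app (sdag i) vac (sinv Lc K x)) = (\<Sum>i\<in>UNIV. if x = I i then 1 else 0)"
    proof (intro sum.cong refl)
      fix i
      have "(sinv Lc K x = {i}) = (x = sig Lc K {i})"
      proof
        assume "sinv Lc K x = {i}"
        then have "sig Lc K (sinv Lc K x) = sig Lc K {i}" by simp
        then show "x = sig Lc K {i}" using ss by simp
      next
        assume "x = sig Lc K {i}"
        then show "sinv Lc K x = {i}" using si by simp
      qed
      also have "sig Lc K {i} = I i" using sig_single colK by simp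
      finally show "app (sdag i) vac (sinv Lc K x) = (if x = I i then 1 else 0)" by (simp add: sd)
    qed
    then show "app M Wstate x = complex_of_real (1 / sqrt (real (card (UNIV :: 'v set)))) *
        app (\<lambda>x y. \<Sum>i\<in>UNIV. nstr (I i) {} x y) vac x"
      unfolding appM Wstate_def qd by simp
  qed
  have V: "app M vac = vac"
  proof (intro ext)
    fix x
    have "(sinv Lc K x = {}) = (x = sig Lc K {})"
    proof
      assume "sinv Lc K x = {}"
      then have "sig Lc K (sinv Lc K x) = sig Lc K {}" by simp
      then show "x = sig Lc K {}" using ss by simp
    next
      assume "x = sig Lc K {}"
      then show "sinv Lc K x = {}" using si by simp
    qed
    then show "app M vac x = vac x" unfolding appM vac_def sig_empty by simp
  qed
  show ?thesis using lp W V by blast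
qed

end



lemma mmul_sdag_sann: "mmul (sdag i) (sann i) = nstr {i} {i}"
proof (intro ext)
  fix x y
  have "mmul (sdag i) (sann i) x y = (\<Sum>z\<in>UNIV. if z = y - {i} then (if i \<in> y \<and> x = z \<union> {i} then 1 else 0) else 0)"
    unfolding mmul_def sdag_def sann_def nstr_def by (intro sum.cong refl) auto
  also have "\<dots> = (if i \<in> y \<and> x = (y - {i}) \<union> {i} then 1 else 0)" by simp
  also have "\<dots> = nstr {i} {i} x y" unfolding nstr_def by auto
  finally show "mmul (sdag i) (sann i) x y = nstr {i} {i} x y" .
qed

lemma nstr_ii: "nstr {i} {i} x y = (if i \<in> y \<and> x = y then 1 else 0)"
  unfolding nstr_def by auto

lemma app_idop: "app idop \<psi> = \<psi>"
proof (intro ext)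
  fix x
  have "app idop \<psi> x = (\<Sum>y\<in>UNIV. if y = x then \<psi> y else 0)"
    unfolding app_def idop_def by (intro sum.cong refl) auto
  then show "app idop \<psi> x = \<psi> x" by simp
qed

lemma sum_single_sets:
  fixes g :: "'v::finite set \<Rightarrow> complex"
  shows "(\<Sum>J\<in>UNIV. if card J = 1 then g J else 0) = (\<Sum>i\<in>UNIV. g {i})"
proof -
  have "(\<Sum>J\<in>UNIV. if card J = 1 then g J else 0) = (\<Sum>J\<in>{J. card J = 1}. g J)"
    by (simp add: sum.inter_filter[symmetric])
  also have "{J :: 'v set. card J = 1} = (\<lambda>i. {i}) ` UNIV"
    by (auto simp: card_1_singleton_iff)
  also have "(\<Sum>J\<in>(\<lambda>i. {i}) ` UNIV. g J) = (\<Sum>i\<in>UNIV. g {i})"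
    by (rule sum.reindex_cong[where l="\<lambda>i. {i}"]) (auto simp: inj_on_def)
  finally show ?thesis .
qed

theorem proposition7:
  fixes E :: "'v::finite \<Rightarrow> 'v \<Rightarrow> bool"
    and \<Delta> c d :: nat
    and I :: "'v \<Rightarrow> 'v set"
  assumes graph: "simple_graph E"
    and Delta: "\<Delta> = max_degree E"
    and c_gt: "c > 1"
    and card_I: "\<forall>i. card (I i) = c"
    and near_I: "\<forall>i. \<forall>j\<in>I i. gdist E j i \<le> enat d"
    and inj_I: "inj I"
  defines "N \<equiv> card (UNIV :: 'v set)"
    and "Qd \<equiv> (\<lambda>x y. \<Sum>i\<in>UNIV. nstr (I i) {} x y)"
    and "B \<equiv> 8 * d * (\<Delta> ^ (4 * d) + 1)"
  shows "(\<exists>M \<delta>. \<delta> \<le> B \<and> loc_preserving E \<delta> M \<and>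
            app M Wstate = (\<lambda>x. complex_of_real (1 / sqrt (real N)) * app Qd vac x) \<and>
            app M vac = vac)
       \<and> (graph_connected E \<longrightarrow>
            (\<forall>R H. 0 < R \<and> N > \<Delta> ^ (4 * (R + B)) + 1 \<and> range_le E H R \<and>
                proportional (app H vac) vac \<and>
                proportional (app H (app Qd vac)) (app Qd vac) \<longrightarrow>
              (\<exists>(\<Omega>::complex) (\<omega>::complex) (h :: 'v set \<Rightarrow> 'v qop).
                 (\<forall>X. X \<noteq> {} \<and> diam E X \<le> enat (2 * R + 3 * B) \<longrightarrow>
                    supported_in (h X) X \<and> app (h X) (app Qd vac) = (\<lambda>_. 0) \<and>
                    app (h X) vac = (\<lambda>_. 0)) \<and>
                 H = (\<lambda>x y. \<Omega> * idop x y
                        + \<omega> * (\<Sum>i\<in>UNIV. mmul (sdag i) (sann i) x y)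
                        + (\<Sum>X\<in>{X. X \<noteq> {} \<and> diam E X \<le> enat (2 * R + 3 * B)}. h X x y)))))"
proof -
  have nearI: "near E d j i" if "j \<in> I i" for i j
  proof -
    have "gdist E j i \<le> enat d" using near_I that by blast
    then show ?thesis by (simp only: gdist_le_iff)
  qed
  interpret qs: qsetup E I c d
  proof
    show "simple_graph E" by (rule graph)
    show "1 < c" using c_gt by simp
    show "\<And>i. card (I i) = c" using card_I by blast
    show "\<And>i j. j \<in> I i \<Longrightarrow> near E d j i" by (rule nearI)
    show "inj I" by (rule inj_I)
  qed
  have qv: "app Qd vac = qstate I"
  proof (intro ext)
    fix x
    have "app Qd vac x = (\<Sum>i\<in>UNIV. if x = I i then 1 else 0)"
      unfolding app_vac Qd_def nstr_def by simp
    also have "\<dots> = qstate I x"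
    proof (cases "x \<in> range I")
      case True
      then obtain i0 where i0: "x = I i0" by blast
      have "(\<Sum>i\<in>UNIV. if x = I i then (1::complex) else 0) = (\<Sum>i\<in>UNIV. if i = i0 then 1 else 0)"
        using inj_I i0 by (intro sum.cong refl) (auto simp: inj_eq)
      then show ?thesis using True unfolding qstate_def by simp
    next
      case False
      then have "\<And>i. x \<noteq> I i" by blast
      then show ?thesis using False unfolding qstate_def by simp
    qed
    finally show "app Qd vac x = qstate I x" .
  qed
  have P1: "\<exists>M \<delta>. \<delta> \<le> B \<and> loc_preserving E \<delta> M \<and>
            app M Wstate = (\<lambda>x. complex_of_real (1 / sqrt (real N)) * app Qd vac x) \<and>
            app M vac = vac"
  proof -
    have deg: "\<And>a. card {b. b \<noteq> a \<and> near E (4 * d) a b} \<le> \<Delta> ^ (4 * d)"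
      using qs.ball_card Delta by simp
    have sy: "\<And>a b. near E (4 * d) a b \<Longrightarrow> near E (4 * d) b a" using near_sym[OF graph] by blast
    obtain col where col: "\<forall>v. col v \<le> \<Delta> ^ (4 * d)" "\<forall>a b. a \<noteq> b \<and> near E (4 * d) a b \<longrightarrow> col a \<noteq> col b"
      using greedy_coloring[of "near E (4 * d)" "\<Delta> ^ (4 * d)", OF sy deg] by blast
    have "\<exists>M. loc_preserving E (8 * d * (\<Delta> ^ (4 * d) + 1)) M \<and>
      app M Wstate = (\<lambda>x. complex_of_real (1 / sqrt (real (card (UNIV :: 'v set)))) *
        app (\<lambda>x y. \<Sum>i\<in>UNIV. nstr (I i) {} x y) vac x) \<and> app M vac = vac"
    proof (rule qs.part1)
      show "\<And>v. col v < \<Delta> ^ (4 * d) + 1" using col(1) by (simp add: less_Suc_eq_le)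
      show "\<And>a b. a \<noteq> b \<Longrightarrow> near E (4 * d) a b \<Longrightarrow> col a \<noteq> col b" using col(2) by blast
    qed
    then show ?thesis unfolding N_def Qd_def B_def by blast
  qed
  have P2: "graph_connected E \<longrightarrow>
            (\<forall>R H. 0 < R \<and> N > \<Delta> ^ (4 * (R + B)) + 1 \<and> range_le E H R \<and>
                proportional (app H vac) vac \<and>
                proportional (app H (app Qd vac)) (app Qd vac) \<longrightarrow>
              (\<exists>(\<Omega>::complex) (\<omega>::complex) (h :: 'v set \<Rightarrow> 'v qop).
                 (\<forall>X. X \<noteq> {} \<and> diam E X \<le> enat (2 * R + 3 * B) \<longrightarrow>
                    supported_in (h X) X \<and> app (h X) (app Qd vac) = (\<lambda>_. 0) \<and>
                    app (h X) vac = (\<lambda>_. 0)) \<and>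
                 H = (\<lambda>x y. \<Omega> * idop x y
                        + \<omega> * (\<Sum>i\<in>UNIV. mmul (sdag i) (sann i) x y)
                        + (\<Sum>X\<in>{X. X \<noteq> {} \<and> diam E X \<le> enat (2 * R + 3 * B)}. h X x y))))"
  proof (intro impI allI)
    assume conn: "graph_connected E"
    fix R :: nat and H :: "'v qop"
    assume hyp: "0 < R \<and> N > \<Delta> ^ (4 * (R + B)) + 1 \<and> range_le E H R \<and>
                proportional (app H vac) vac \<and>
                proportional (app H (app Qd vac)) (app Qd vac)"
    have R0: "0 < R" and rl: "range_le E H R" using hyp by auto
    obtain a where ha: "app H vac = (\<lambda>x. a * vac x)" using hyp unfolding proportional_def by blast
    obtain b where hb: "app H (qstate I) = (\<lambda>x. b * qstate I x)"
      using hyp unfolding proportional_def qv by blast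
    obtain cc where cc: "H = (\<lambda>x y. \<Sum>J\<in>UNIV. \<Sum>K\<in>UNIV. cc J K * nstr J K x y)"
      "\<And>J K. cc J K \<noteq> 0 \<Longrightarrow> 0 < R \<and> (\<forall>a\<in>J \<union> K. \<forall>b\<in>J \<union> K. near E (R - 1) a b)"
      using range_le_terms[OF rl] by blast
    define om where "om = (b - a) / of_nat c"
    define Nop :: "'v qop" where "Nop = (\<lambda>x y. \<Sum>i\<in>UNIV. mmul (sdag i) (sann i) x y)"
    have Nop_eq: "Nop x y = (if x = y then of_nat (card y) else 0)" for x y :: "'v set"
    proof -
      have "Nop x y = (\<Sum>i\<in>UNIV. if i \<in> y \<and> x = y then (1::complex) else 0)"
        unfolding Nop_def mmul_sdag_sann nstr_ii by simp
      also have "\<dots> = (if x = y then (\<Sum>i\<in>UNIV. if i \<in> y then (1::complex) else 0) else 0)"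
        by simp
      also have "(\<Sum>i\<in>UNIV. if i \<in> y then (1::complex) else 0) = of_nat (card y)"
        by (simp add: sum.inter_filter[symmetric])
      finally show ?thesis .
    qed
    define H1 :: "'v qop" where "H1 = (\<lambda>x y. H x y - a * idop x y - om * Nop x y)"
    define e :: "'v set \<Rightarrow> 'v set \<Rightarrow> complex" where "e J K = cc J K - (if J = {} \<and> K = {} then a else 0) - (if J = K \<and> card J = 1 then om else 0)" for J K
    have H1e: "H1 = (\<lambda>x y. \<Sum>J\<in>UNIV. \<Sum>K\<in>UNIV. e J K * nstr J K x y)"
    proof (intro ext)
      fix x y :: "'v set"
      have s2: "(\<Sum>J\<in>UNIV. \<Sum>K\<in>UNIV. (if J = {} \<and> K = {} then a else 0) * nstr J K x y) = a * idop x y"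
      proof -
        have "(\<Sum>J\<in>UNIV. \<Sum>K\<in>UNIV. (if J = {} \<and> K = {} then a else 0) * nstr J K x y)
            = (\<Sum>J\<in>(UNIV :: 'v set set). if J = {} then a * nstr {} {} x y else 0)"
        proof (rule sum.cong[OF refl])
          fix J :: "'v set"
          have "(\<Sum>K\<in>UNIV. (if J = {} \<and> K = {} then a else 0) * nstr J K x y)
              = (\<Sum>K\<in>UNIV. if K = {} then (if J = {} then a * nstr J K x y else 0) else 0)"
            by (intro sum.cong refl) auto
          then show "(\<Sum>K\<in>UNIV. (if J = {} \<and> K = {} then a else 0) * nstr J K x y)
              = (if J = {} then a * nstr {} {} x y else 0)" by simp
        qed
        also have "\<dots> = a * nstr {} {} x y" by simp
        also have "nstr {} {} x y = idop x y" unfolding nstr_def idop_def by simp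
        finally show ?thesis .
      qed
      have s3: "(\<Sum>J\<in>UNIV. \<Sum>K\<in>UNIV. (if J = K \<and> card J = 1 then om else 0) * nstr J K x y) = om * Nop x y"
      proof -
        have "(\<Sum>J\<in>UNIV. \<Sum>K\<in>UNIV. (if J = K \<and> card J = 1 then om else 0) * nstr J K x y)
            = (\<Sum>J\<in>UNIV. if card J = 1 then om * nstr J J x y else 0)"
        proof (rule sum.cong[OF refl])
          fix J :: "'v set"
          have "(\<Sum>K\<in>UNIV. (if J = K \<and> card J = 1 then om else 0) * nstr J K x y)
              = (\<Sum>K\<in>UNIV. if K = J then (if card J = 1 then om * nstr J K x y else 0) else 0)"
            by (intro sum.cong refl) auto
          then show "(\<Sum>K\<in>UNIV. (if J = K \<and> card J = 1 then om else 0) * nstr J K x y)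
              = (if card J = 1 then om * nstr J J x y else 0)" by simp
        qed
        also have "\<dots> = (\<Sum>i\<in>UNIV. om * nstr {i} {i} x y)" by (rule sum_single_sets)
        also have "\<dots> = om * Nop x y" unfolding Nop_def mmul_sdag_sann by (simp add: sum_distrib_left)
        finally show ?thesis .
      qed
      have "(\<Sum>J\<in>UNIV. \<Sum>K\<in>UNIV. e J K * nstr J K x y)
          = (\<Sum>J\<in>UNIV. \<Sum>K\<in>UNIV. cc J K * nstr J K x y)
            - (\<Sum>J\<in>UNIV. \<Sum>K\<in>UNIV. (if J = {} \<and> K = {} then a else 0) * nstr J K x y)
            - (\<Sum>J\<in>UNIV. \<Sum>K\<in>UNIV. (if J = K \<and> card J = 1 then om else 0) * nstr J K x y)"
        unfolding e_def by (simp add: left_diff_distrib sum_subtractf)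
      then show "H1 x y = (\<Sum>J\<in>UNIV. \<Sum>K\<in>UNIV. e J K * nstr J K x y)"
        unfolding H1_def s2 s3 using cc(1) by simp
    qed
    have loc_e: "\<forall>a'\<in>J \<union> K. \<forall>b'\<in>J \<union> K. near E (R - 1) a' b'" if ne: "e J K \<noteq> 0" for J K
    proof (cases "cc J K = 0")
      case False then show ?thesis using cc(2) by blast
    next
      case True
      then have "(J = {} \<and> K = {}) \<or> (J = K \<and> card J = 1)" using ne unfolding e_def by (auto split: if_splits)
      then show ?thesis
      proof
        assume "J = {} \<and> K = {}" then show ?thesis by simp
      next
        assume h: "J = K \<and> card J = 1"
        then obtain i where "J = {i}" "K = {i}" by (auto simp: card_1_singleton_iff)
        then show ?thesis by (simp add: near_refl)
      qed
    qed
    have vac0: "app H1 vac = (\<lambda>_. 0)"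
    proof (intro ext)
      fix x
      have "H x {} = a * vac x" using ha app_vac[of H x] by metis
      moreover have "idop x {} = vac x" unfolding idop_def vac_def by simp
      moreover have "Nop x {} = 0" using Nop_eq by simp
      ultimately show "app H1 vac x = 0" unfolding app_vac H1_def by simp
    qed
    have cpos: "(of_nat c :: complex) \<noteq> 0" using c_gt by simp
    have appN: "app Nop (qstate I) x = of_nat c * qstate I x" for x
    proof -
      have "app Nop (qstate I) x = (\<Sum>y\<in>UNIV. if y = x then of_nat (card x) * qstate I x else 0)"
        unfolding app_def Nop_eq by (intro sum.cong refl) auto
      also have "\<dots> = of_nat (card x) * qstate I x" by simp
      also have "\<dots> = of_nat c * qstate I x"
        unfolding qstate_def using card_I by auto
      finally show ?thesis .
    qed
    have q0: "app H1 (qstate I) = (\<lambda>_. 0)"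
    proof (intro ext)
      fix x
      have ap: "app H1 (qstate I) x = b * qstate I x - a * qstate I x - om * (of_nat c * qstate I x)"
        unfolding H1_def app_diff app_scale app_idop hb appN by simp
      have oc: "om * of_nat c = b - a" unfolding om_def using cpos by simp
      have "om * (of_nat c * qstate I x) = (b - a) * qstate I x"
        by (simp only: mult.assoc[symmetric] oc)
      then have "b * qstate I x - a * qstate I x - om * (of_nat c * qstate I x) = 0"
        by (simp add: algebra_simps)
      then show "app H1 (qstate I) x = 0" using ap by simp
    qed
    define D where "D = 2 * R + 3 * B"
    have Bge: "8 * d \<le> B" unfolding B_def by simp
    have Dle: "2 * (R - 1) + 4 * d + 2 \<le> D" unfolding D_def using R0 Bge by linarith
    have "LD E I D H1"
      by (rule qs.main_LD[OF conn Dle H1e loc_e vac0 q0]) simp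
    then obtain h where h: "\<forall>X. smallset E D X \<longrightarrow> good I (h X) X"
      "H1 = (\<lambda>x y. \<Sum>X\<in>{X. smallset E D X}. h X x y)" unfolding LD_def by blast
    have setq: "{X. smallset E D X} = {X. X \<noteq> {} \<and> diam E X \<le> enat (2 * R + 3 * B)}"
      unfolding smallset_def D_def by simp
    show "\<exists>(\<Omega>::complex) (\<omega>::complex) (h :: 'v set \<Rightarrow> 'v qop).
                 (\<forall>X. X \<noteq> {} \<and> diam E X \<le> enat (2 * R + 3 * B) \<longrightarrow>
                    supported_in (h X) X \<and> app (h X) (app Qd vac) = (\<lambda>_. 0) \<and>
                    app (h X) vac = (\<lambda>_. 0)) \<and>
                 H = (\<lambda>x y. \<Omega> * idop x y
                        + \<omega> * (\<Sum>i\<in>UNIV. mmul (sdag i) (sann i) x y)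
                        + (\<Sum>X\<in>{X. X \<noteq> {} \<and> diam E X \<le> enat (2 * R + 3 * B)}. h X x y))"
    proof (intro exI conjI allI impI)
      fix X assume "X \<noteq> {} \<and> diam E X \<le> enat (2 * R + 3 * B)"
      then have "good I (h X) X" using h(1) unfolding smallset_def D_def by blast
      then show "supported_in (h X) X" "app (h X) (app Qd vac) = (\<lambda>_. 0)" "app (h X) vac = (\<lambda>_. 0)"
        unfolding good_def qv by auto
    next
      show "H = (\<lambda>x y. a * idop x y
                        + om * (\<Sum>i\<in>UNIV. mmul (sdag i) (sann i) x y)
                        + (\<Sum>X\<in>{X. X \<noteq> {} \<and> diam E X \<le> enat (2 * R + 3 * B)}. h X x y))"
      proof (intro ext)
        fix x y
        have "H1 x y = (\<Sum>X\<in>{X. X \<noteq> {} \<and> diam E X \<le> enat (2 * R + 3 * B)}. h X x y)"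
          using h(2) setq by simp
        then show "H x y = a * idop x y + om * (\<Sum>i\<in>UNIV. mmul (sdag i) (sann i) x y)
                        + (\<Sum>X\<in>{X. X \<noteq> {} \<and> diam E X \<le> enat (2 * R + 3 * B)}. h X x y)"
          unfolding H1_def Nop_def by (simp add: algebra_simps)
      qed
    qed
  qed
  show ?thesis using P1 P2 by blast
qed


end
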